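(* Let $(\mathfrak{g},V,\Theta)$ be a Lie-Leibniz triple, with associated graded Lie algebra $T_{\leq-1}$ and differential $\partial=(\partial_{-i}:T_{-i-1}\to T_{-i})_{i\geq1}$. For each $i\geq1$ let $R_{-i}$ be the cyclic $\mathfrak{g}$-submodule of $\mathrm{Hom}(T_{-i-1},T_{-i})$ generated by $\partial_{-i}$. Then for every $i\geq1$ there exists a surjective morphism of $\mathfrak{g}$-modules $\mu_{-i}:R_\Theta\to R_{-i}$ such that $\partial_{-i}=\mu_{-i}(\Theta)$.
   Context: A (left) Leibniz algebra is a vector space $V$ with bilinear $\circ$ satisfying $x\circ(y\circ z)=(x\circ y)\circ z+y\circ(x\circ z)$; $\{x,y\}=\frac12(x\circ y+y\circ x)$. A Lie-Leibniz triple $(\mathfrak{g},V,\Theta)$ consists of a Lie algebra $\mathfrak{g}$, a $\mathfrak{g}$-module $V$ (action $a\cdot x$) with a Leibniz product $\circ$, and a linear map $\Theta:V\to\mathfrak{g}$ with $x\circ y=\Theta(x)\cdot y$ and $\Theta(x\circ y)=[\Theta(x),\Theta(y)]$. $\mathfrak{g}$ acts on $\mathrm{Hom}(V,\mathfrak{g})$ by $(a\cdot\Xi)(x)=[a,\Xi(x)]-\Xi(a\cdot x)$, and $R_\Theta$ is the cyclic $\mathfrak{g}$-submodule generated by $\Theta$ (spanned by $\Theta$ and all $a_1\cdot(a_2\cdot(\cdots(a_m\cdot\Theta)))$). Similarly $\mathfrak g$ acts on $\mathrm{Hom}(T_{-i-1},T_{-i})$ by $(a\cdot f)(x)=a\cdot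 f(x)-f(a\cdot x)$. Associated graded Lie algebra: let $K$ be the largest $\mathfrak{g}$-submodule of $S^2(V)$ in the kernel of $x\odot y\mapsto\{x,y\}$; $F$ the free graded Lie algebra on $V[1]$ (degree $-1$), $F_{-2}\cong S^2(V)$, $\mathfrak g$ acting by derivations; $K_{-2}=K$, $K_{-i}=\sum_{j=1}^{i-2}[F_{-j},K_{-i+j}]$ ($i\geq3$); $T_{\leq-1}=F/K_\bullet$, $T_{-1}=V[1]$, with induced bracket $\llbracket\,.\,,.\,\rrbracket$ and $\mathfrak{g}$-action. With $\mathfrak{h}=\mathrm{Im}\Theta$, $\partial$ is the unique family of $\mathfrak{h}$-equivariant linear maps $\partial_{-i}:T_{-i-1}\to T_{-i}$ with $\partial\llbracket u,v\rrbracket=2\{u,v\}$, $\partial\llbracket u,x\rrbracket=\Theta(u)\cdot x-\llbracket u,\partial x\rrbracket$, $\partial\llbracket x,y\rrbracket=\llbracket\partial x,y\rrbracket+(-1)^{|x|}\llbracket x,\partial y\rrbracket$ for $u,v\in T_{-1}$, $x,y\in T_{\leq-2}$. *)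

theory Defs
  imports Complex_Main "HOL-Library.Function_Algebras"
begin

definition lie_algebra :: "('k::field \<Rightarrow> 'g \<Rightarrow> 'g::ab_group_add) \<Rightarrow> ('g \<Rightarrow> 'g \<Rightarrow> 'g) \<Rightarrow> bool" where
  "lie_algebra sg br \<longleftrightarrow> Vector_Spaces.vector_space sg
     \<and> (\<forall>x y z. br (x + y) z = br x z + br y z) \<and> (\<forall>x y z. br x (y + z) = br x y + br x z)
     \<and> (\<forall>c x y. br (sg c x) y = sg c (br x y)) \<and> (\<forall>c x y. br x (sg c y) = sg c (br x y))
     \<and> (\<forall>x. br x x = 0)
     \<and> (\<forall>x y z. br x (br y z) + br y (br z x) + br z (br x y) = 0)"

definition lie_module :: "('k::field \<Rightarrow> 'g \<Rightarrow> 'g::ab_group_add) \<Rightarrow> ('g \<Rightarrow> 'g \<Rightarrow> 'g) \<Rightarrow>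
    ('k \<Rightarrow> 'v \<Rightarrow> 'v::ab_group_add) \<Rightarrow> ('g \<Rightarrow> 'v \<Rightarrow> 'v) \<Rightarrow> bool" where
  "lie_module sg br sv act \<longleftrightarrow> Vector_Spaces.vector_space sv
     \<and> (\<forall>a b x. act (a + b) x = act a x + act b x) \<and> (\<forall>a x y. act a (x + y) = act a x + act a y)
     \<and> (\<forall>c a x. act (sg c a) x = sv c (act a x)) \<and> (\<forall>c a x. act a (sv c x) = sv c (act a x))
     \<and> (\<forall>a b x. act (br a b) x = act a (act b x) - act b (act a x))"

definition leibniz_algebra :: "('k::field \<Rightarrow> 'v \<Rightarrow> 'v::ab_group_add) \<Rightarrow> ('v \<Rightarrow> 'v \<Rightarrow> 'v) \<Rightarrow> bool" where
  "leibniz_algebra sv circ \<longleftrightarrow> Vector_Spaces.vector_space sv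
     \<and> (\<forall>x y z. circ (x + y) z = circ x z + circ y z) \<and> (\<forall>x y z. circ x (y + z) = circ x y + circ x z)
     \<and> (\<forall>c x y. circ (sv c x) y = sv c (circ x y)) \<and> (\<forall>c x y. circ x (sv c y) = sv c (circ x y))
     \<and> (\<forall>x y z. circ x (circ y z) = circ (circ x y) z + circ y (circ x z))"

definition lie_leibniz_triple ::
  "('k::field \<Rightarrow> 'g \<Rightarrow> 'g::ab_group_add) \<Rightarrow> ('g \<Rightarrow> 'g \<Rightarrow> 'g) \<Rightarrow>
   ('k \<Rightarrow> 'v \<Rightarrow> 'v::ab_group_add) \<Rightarrow> ('g \<Rightarrow> 'v \<Rightarrow> 'v) \<Rightarrow> ('v \<Rightarrow> 'v \<Rightarrow> 'v) \<Rightarrow> ('v \<Rightarrow> 'g) \<Rightarrow> bool" where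
  "lie_leibniz_triple sg br sv act circ Theta \<longleftrightarrow>
     lie_algebra sg br \<and> lie_module sg br sv act \<and> leibniz_algebra sv circ
     \<and> Vector_Spaces.linear sv sg Theta
     \<and> (\<forall>x y. circ x y = act (Theta x) y)
     \<and> (\<forall>x y. Theta (circ x y) = br (Theta x) (Theta y))"

definition symprod :: "('k::field \<Rightarrow> 'v \<Rightarrow> 'v::ab_group_add) \<Rightarrow> ('v \<Rightarrow> 'v \<Rightarrow> 'v) \<Rightarrow> 'v \<Rightarrow> 'v \<Rightarrow> 'v" where
  "symprod sv circ x y = sv (1/2) (circ x y + circ y x)"

inductive_set gspan :: "'a \<Rightarrow> ('a \<Rightarrow> 'a \<Rightarrow> 'a) \<Rightarrow> ('k \<Rightarrow> 'a \<Rightarrow> 'a) \<Rightarrow> 'a set \<Rightarrow> 'a set"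
  for z :: 'a and ad :: "'a \<Rightarrow> 'a \<Rightarrow> 'a" and sm :: "'k \<Rightarrow> 'a \<Rightarrow> 'a" and S :: "'a set" where
  gspan_zero: "z \<in> gspan z ad sm S"
| gspan_base: "x \<in> S \<Longrightarrow> x \<in> gspan z ad sm S"
| gspan_add: "x \<in> gspan z ad sm S \<Longrightarrow> y \<in> gspan z ad sm S \<Longrightarrow> ad x y \<in> gspan z ad sm S"
| gspan_smul: "x \<in> gspan z ad sm S \<Longrightarrow> sm c x \<in> gspan z ad sm S"

definition homVact :: "('g \<Rightarrow> 'g \<Rightarrow> 'g::ab_group_add) \<Rightarrow> ('g \<Rightarrow> 'v \<Rightarrow> 'v) \<Rightarrow> 'g \<Rightarrow> ('v \<Rightarrow> 'g) \<Rightarrow> ('v \<Rightarrow> 'g)" where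
  "homVact br act a Xi = (\<lambda>x. br a (Xi x) - Xi (act a x))"

definition homVadd :: "('v \<Rightarrow> 'g::ab_group_add) \<Rightarrow> ('v \<Rightarrow> 'g) \<Rightarrow> ('v \<Rightarrow> 'g)" where
  "homVadd f h = (\<lambda>x. f x + h x)"

definition homVsmul :: "('k \<Rightarrow> 'g \<Rightarrow> 'g) \<Rightarrow> 'k \<Rightarrow> ('v \<Rightarrow> 'g) \<Rightarrow> ('v \<Rightarrow> 'g)" where
  "homVsmul sg c f = (\<lambda>x. sg c (f x))"

definition R_Theta :: "('k \<Rightarrow> 'g \<Rightarrow> 'g::ab_group_add) \<Rightarrow> ('g \<Rightarrow> 'g \<Rightarrow> 'g) \<Rightarrow> ('g \<Rightarrow> 'v \<Rightarrow> 'v) \<Rightarrow>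
    ('v \<Rightarrow> 'g) \<Rightarrow> ('v \<Rightarrow> 'g) set" where
  "R_Theta sg br act Theta =
     gspan (\<lambda>_. 0) homVadd (homVsmul sg) {foldr (homVact br act) as Theta | as. True}"

section \<open>Free graded Lie (super)algebra F on V[1], realised as the free nonassociative
  algebra on V (formal linear combinations of binary trees with leaves in V) modulo the
  ideal generated by linearity in the leaves, graded antisymmetry and graded Jacobi.
  A tree with n leaves has degree -n.\<close>

datatype 'v ltree = Leaf 'v | Node "'v ltree" "'v ltree"

fun nlv :: "'v ltree \<Rightarrow> nat" where
  "nlv (Leaf x) = 1"
| "nlv (Node s t) = nlv s + nlv t"

text \<open>Formal (finitely supported) linear combinations of trees.\<close>
type_synonym ('v, 'k) fv = "'v ltree \<Rightarrow> 'k"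

definition dl :: "'v ltree \<Rightarrow> ('v, 'k::zero_neq_one) fv" where
  "dl t = (\<lambda>s. if s = t then 1 else 0)"

definition smul :: "'k::times \<Rightarrow> ('v, 'k) fv \<Rightarrow> ('v, 'k) fv" where
  "smul c f = (\<lambda>s. c * f s)"

definition brF :: "('v, 'k::{zero,times}) fv \<Rightarrow> ('v, 'k) fv \<Rightarrow> ('v, 'k) fv" where
  "brF f h = (\<lambda>t. case t of Leaf _ \<Rightarrow> 0 | Node s r \<Rightarrow> f s * h r)"

definition FT :: "nat \<Rightarrow> ('v, 'k::field) fv set" where
  "FT i = gspan 0 (+) smul {dl t | t. nlv t = i}"

definition FTtot :: "('v, 'k::field) fv set" where
  "FTtot = gspan 0 (+) smul (range dl)"

definition sgnk :: "nat \<Rightarrow> 'k::field" where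
  "sgnk n = (-1) ^ n"

definition relgens :: "('k::field \<Rightarrow> 'v \<Rightarrow> 'v::ab_group_add) \<Rightarrow> ('v, 'k) fv set" where
  "relgens sv =
     {dl (Leaf (sv c x + y)) - smul c (dl (Leaf x)) - dl (Leaf y) | c x y. True}
   \<union> {brF (dl s) (dl t) + smul (sgnk (nlv s * nlv t)) (brF (dl t) (dl s)) | s t. True}
   \<union> {brF (dl s) (brF (dl t) (dl r)) - brF (brF (dl s) (dl t)) (dl r)
        - smul (sgnk (nlv s * nlv t)) (brF (dl t) (brF (dl s) (dl r))) | s t r. True}"

inductive_set Iid :: "('k::field \<Rightarrow> 'v \<Rightarrow> 'v::ab_group_add) \<Rightarrow> ('v, 'k) fv set"
  for sv :: "'k \<Rightarrow> 'v \<Rightarrow> 'v" where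
  Iid_gen: "f \<in> relgens sv \<Longrightarrow> f \<in> Iid sv"
| Iid_zero: "0 \<in> Iid sv"
| Iid_add: "f \<in> Iid sv \<Longrightarrow> h \<in> Iid sv \<Longrightarrow> f + h \<in> Iid sv"
| Iid_smul: "f \<in> Iid sv \<Longrightarrow> smul c f \<in> Iid sv"
| Iid_brl: "f \<in> Iid sv \<Longrightarrow> brF (dl p) f \<in> Iid sv"
| Iid_brr: "f \<in> Iid sv \<Longrightarrow> brF f (dl p) \<in> Iid sv"

fun actTree :: "('g \<Rightarrow> 'v \<Rightarrow> 'v) \<Rightarrow> 'g \<Rightarrow> 'v ltree \<Rightarrow> ('v, 'k::field) fv" where
  "actTree act a (Leaf x) = dl (Leaf (act a x))"
| "actTree act a (Node s t) = brF (actTree act a s) (dl t) + brF (dl s) (actTree act a t)"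

definition actF :: "('g \<Rightarrow> 'v \<Rightarrow> 'v) \<Rightarrow> 'g \<Rightarrow> ('v, 'k::field) fv \<Rightarrow> ('v, 'k) fv" where
  "actF act a f = (\<Sum>t\<in>{t. f t \<noteq> 0}. smul (f t) (actTree act a t))"

text \<open>The map F_{-2} = S^2(V) -> V, [u,v] = u.v |-> {u,v}, on representatives.\<close>
fun phiT :: "('k::field \<Rightarrow> 'v \<Rightarrow> 'v::ab_group_add) \<Rightarrow> ('v \<Rightarrow> 'v \<Rightarrow> 'v) \<Rightarrow> 'v ltree \<Rightarrow> 'v" where
  "phiT sv circ (Node (Leaf u) (Leaf v)) = symprod sv circ u v"
| "phiT sv circ _ = 0"

definition Phi :: "('k::field \<Rightarrow> 'v \<Rightarrow> 'v::ab_group_add) \<Rightarrow> ('v \<Rightarrow> 'v \<Rightarrow> 'v) \<Rightarrow> ('v, 'k) fv \<Rightarrow> 'v" where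
  "Phi sv circ f = (\<Sum>t\<in>{t. f t \<noteq> 0}. sv (f t) (phiT sv circ t))"

text \<open>Lift to F-tilde_{-2} of K = K_{-2}: the largest g-submodule of F_{-2} contained in the
  kernel of x.y |-> {x,y}; submodules of F_{-2} are represented by subspaces of
  F-tilde_{-2} containing the relations of degree 2.\<close>
definition K2set :: "('k::field \<Rightarrow> 'v \<Rightarrow> 'v::ab_group_add) \<Rightarrow> ('g \<Rightarrow> 'v \<Rightarrow> 'v) \<Rightarrow> ('v \<Rightarrow> 'v \<Rightarrow> 'v) \<Rightarrow> ('v, 'k) fv set" where
  "K2set sv act circ = \<Union>{M. M \<subseteq> FT 2 \<and> Iid sv \<inter> FT 2 \<subseteq> M \<and> gspan 0 (+) smul M = M
       \<and> (\<forall>a. \<forall>m\<in>M. actF act a m \<in> M) \<and> (\<forall>m\<in>M. Phi sv circ m = 0)}"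

text \<open>Lifts of K_{-i} = sum_{j=1}^{i-2} [F_{-j}, K_{-i+j}] (i >= 3), together with the relations.\<close>
inductive KK :: "('v, 'k::field) fv set \<Rightarrow> ('v, 'k) fv set \<Rightarrow> nat \<Rightarrow> ('v, 'k) fv \<Rightarrow> bool"
  for K2 :: "('v, 'k) fv set" and I :: "('v, 'k) fv set" where
  KK_two: "f \<in> K2 \<Longrightarrow> KK K2 I 2 f"
| KK_rel: "3 \<le> i \<Longrightarrow> f \<in> I \<Longrightarrow> f \<in> FT i \<Longrightarrow> KK K2 I i f"
| KK_br: "3 \<le> i \<Longrightarrow> 1 \<le> j \<Longrightarrow> j + 2 \<le> i \<Longrightarrow> p \<in> FT j \<Longrightarrow> KK K2 I (i - j) q \<Longrightarrow> KK K2 I i (brF p q)"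
| KK_add: "3 \<le> i \<Longrightarrow> KK K2 I i f \<Longrightarrow> KK K2 I i h \<Longrightarrow> KK K2 I i (f + h)"
| KK_smul: "3 \<le> i \<Longrightarrow> KK K2 I i f \<Longrightarrow> KK K2 I i (smul c f)"

text \<open>Kernel of F-tilde_{-i} -> T_{-i}.\<close>
definition Ndeg :: "('k::field \<Rightarrow> 'v \<Rightarrow> 'v::ab_group_add) \<Rightarrow> ('g \<Rightarrow> 'v \<Rightarrow> 'v) \<Rightarrow> ('v \<Rightarrow> 'v \<Rightarrow> 'v) \<Rightarrow> nat \<Rightarrow> ('v, 'k) fv set" where
  "Ndeg sv act circ i =
     (if 2 \<le> i then {f. KK (K2set sv act circ) (Iid sv) i f} else Iid sv \<inter> FT i)"

text \<open>Total kernel of F-tilde -> T_{<=-1}.\<close>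
definition Ntot :: "('k::field \<Rightarrow> 'v \<Rightarrow> 'v::ab_group_add) \<Rightarrow> ('g \<Rightarrow> 'v \<Rightarrow> 'v) \<Rightarrow> ('v \<Rightarrow> 'v \<Rightarrow> 'v) \<Rightarrow> ('v, 'k) fv set" where
  "Ntot sv act circ = gspan 0 (+) smul (\<Union>i. Ndeg sv act circ i)"

section \<open>The graded Lie algebra T_{<=-1} = F / K (elements are cosets)\<close>

definition cls :: "('v, 'k::field) fv set \<Rightarrow> ('v, 'k) fv \<Rightarrow> ('v, 'k) fv set" where
  "cls N f = {h. h - f \<in> N}"

definition rep :: "('v, 'k) fv set \<Rightarrow> ('v, 'k) fv" where
  "rep X = (SOME f. f \<in> X)"

definition Tsp :: "('v, 'k::field) fv set \<Rightarrow> nat \<Rightarrow> ('v, 'k) fv set set" where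
  "Tsp N i = cls N ` FT i"

definition addT :: "('v, 'k::field) fv set \<Rightarrow> ('v, 'k) fv set \<Rightarrow> ('v, 'k) fv set \<Rightarrow> ('v, 'k) fv set" where
  "addT N X Y = cls N (rep X + rep Y)"

definition smulT :: "('v, 'k::field) fv set \<Rightarrow> 'k \<Rightarrow> ('v, 'k) fv set \<Rightarrow> ('v, 'k) fv set" where
  "smulT N c X = cls N (smul c (rep X))"

definition brT :: "('v, 'k::field) fv set \<Rightarrow> ('v, 'k) fv set \<Rightarrow> ('v, 'k) fv set \<Rightarrow> ('v, 'k) fv set" where
  "brT N X Y = cls N (brF (rep X) (rep Y))"

definition actT :: "('g \<Rightarrow> 'v \<Rightarrow> 'v) \<Rightarrow> ('v, 'k::field) fv set \<Rightarrow> 'g \<Rightarrow> ('v, 'k) fv set \<Rightarrow> ('v, 'k) fv set" where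
  "actT act N a X = cls N (actF act a (rep X))"

definition iotaT :: "('v, 'k::field) fv set \<Rightarrow> 'v \<Rightarrow> ('v, 'k) fv set" where
  "iotaT N x = cls N (dl (Leaf x))"

section \<open>Hom(T_{-i-1}, T_{-i}) as a g-module; maps are normalised to the zero class
  outside T_{-i-1}\<close>

definition hext :: "('v, 'k::field) fv set \<Rightarrow> nat \<Rightarrow> (('v, 'k) fv set \<Rightarrow> ('v, 'k) fv set) \<Rightarrow> (('v, 'k) fv set \<Rightarrow> ('v, 'k) fv set)" where
  "hext N i phi = (\<lambda>X. if X \<in> Tsp N (i + 1) then phi X else N)"

definition hzero :: "('v, 'k::field) fv set \<Rightarrow> (('v, 'k) fv set \<Rightarrow> ('v, 'k) fv set)" where
  "hzero N = (\<lambda>X. N)"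

definition hadd :: "('v, 'k::field) fv set \<Rightarrow> nat \<Rightarrow> (('v, 'k) fv set \<Rightarrow> ('v, 'k) fv set) \<Rightarrow> (('v, 'k) fv set \<Rightarrow> ('v, 'k) fv set) \<Rightarrow> (('v, 'k) fv set \<Rightarrow> ('v, 'k) fv set)" where
  "hadd N i phi psi = hext N i (\<lambda>X. addT N (phi X) (psi X))"

definition hsmul :: "('v, 'k::field) fv set \<Rightarrow> nat \<Rightarrow> 'k \<Rightarrow> (('v, 'k) fv set \<Rightarrow> ('v, 'k) fv set) \<Rightarrow> (('v, 'k) fv set \<Rightarrow> ('v, 'k) fv set)" where
  "hsmul N i c phi = hext N i (\<lambda>X. smulT N c (phi X))"

definition hact :: "('g \<Rightarrow> 'v \<Rightarrow> 'v) \<Rightarrow> ('v, 'k::field) fv set \<Rightarrow> nat \<Rightarrow> 'g \<Rightarrow> (('v, 'k) fv set \<Rightarrow> ('v, 'k) fv set) \<Rightarrow> (('v, 'k) fv set \<Rightarrow> ('v, 'k) fv set)" where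
  "hact act N i a phi = hext N i (\<lambda>X. addT N (actT act N a (phi X)) (smulT N (-1) (phi (actT act N a X))))"

definition Rcyc :: "('g \<Rightarrow> 'v \<Rightarrow> 'v) \<Rightarrow> ('v, 'k::field) fv set \<Rightarrow> nat \<Rightarrow> (('v, 'k) fv set \<Rightarrow> ('v, 'k) fv set) \<Rightarrow> (('v, 'k) fv set \<Rightarrow> ('v, 'k) fv set) set" where
  "Rcyc act N i phi = gspan (hzero N) (hadd N i) (hsmul N i) {foldr (hact act N i) as phi | as. True}"

definition linear_T :: "('v, 'k::field) fv set \<Rightarrow> nat \<Rightarrow> (('v, 'k) fv set \<Rightarrow> ('v, 'k) fv set) \<Rightarrow> bool" where
  "linear_T N i phi \<longleftrightarrow> (\<forall>X\<in>Tsp N (i + 1). phi X \<in> Tsp N i)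
     \<and> (\<forall>X\<in>Tsp N (i + 1). \<forall>Y\<in>Tsp N (i + 1). phi (addT N X Y) = addT N (phi X) (phi Y))
     \<and> (\<forall>c. \<forall>X\<in>Tsp N (i + 1). phi (smulT N c X) = smulT N c (phi X))"

text \<open>D i stands for partial_{-i} : T_{-i-1} -> T_{-i}, i >= 1.\<close>
definition is_LL_differential ::
  "('k::field_char_0 \<Rightarrow> 'v \<Rightarrow> 'v::ab_group_add) \<Rightarrow> ('g \<Rightarrow> 'v \<Rightarrow> 'v) \<Rightarrow> ('v \<Rightarrow> 'v \<Rightarrow> 'v) \<Rightarrow> ('v \<Rightarrow> 'g) \<Rightarrow>
   (nat \<Rightarrow> ('v, 'k) fv set \<Rightarrow> ('v, 'k) fv set) \<Rightarrow> bool" where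
  "is_LL_differential sv act circ Theta D \<longleftrightarrow>
     (let N = Ntot sv act circ in
       (\<forall>i\<ge>1. linear_T N i (D i))
     \<and> (\<forall>i\<ge>1. \<forall>a\<in>range Theta. \<forall>X\<in>Tsp N (i + 1). D i (actT act N a X) = actT act N a (D i X))
     \<and> (\<forall>u v. D 1 (brT N (iotaT N u) (iotaT N v)) = iotaT N (sv 2 (symprod sv circ u v)))
     \<and> (\<forall>u. \<forall>i\<ge>2. \<forall>X\<in>Tsp N i.
          D i (brT N (iotaT N u) X)
            = addT N (actT act N (Theta u) X) (smulT N (-1) (brT N (iotaT N u) (D (i - 1) X))))
     \<and> (\<forall>i\<ge>2. \<forall>j\<ge>2. \<forall>X\<in>Tsp N i. \<forall>Y\<in>Tsp N j.
          D (i + j - 1) (brT N X Y)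
            = addT N (brT N (D (i - 1) X) Y) (smulT N ((-1) ^ i) (brT N X (D (j - 1) Y)))))"

end

theory Submission
  imports Defs
begin

definition fs :: "('v,'k::zero) fv \<Rightarrow> bool" where
  "fs f \<longleftrightarrow> finite {t. f t \<noteq> 0}"

definition lx :: "('v ltree \<Rightarrow> ('w,'k::field) fv) \<Rightarrow> ('v,'k) fv \<Rightarrow> ('w,'k) fv" where
  "lx T f = (\<Sum>t\<in>{t. f t \<noteq> 0}. smul (f t) (T t))"

lemma sum_fun_app: "(sum F S) x = sum (\<lambda>i. F i x) S"
  by (induct S rule: infinite_finite_induct) auto

lemma smul_apply[simp]: "smul c f x = c * f x" by (simp add: smul_def)
context fixes f g :: "('v,'k::field) fv" begin
lemma smul_0[simp]: "smul 0 f = 0" by (rule ext) (simp add: smul_def)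
lemma smul_z[simp]: "smul c (0::('v,'k) fv) = 0" by (rule ext) (simp add: smul_def)
lemma smul_1[simp]: "smul 1 f = f" by (rule ext) (simp add: smul_def)
lemma smul_add: "smul c (f + g) = smul c f + smul c g" by (rule ext) (simp add: smul_def algebra_simps)
lemma smul_diff: "smul c (f - g) = smul c f - smul c g" by (rule ext) (simp add: smul_def algebra_simps)
lemma smul_uminus: "smul c (- f) = - smul c f" by (rule ext) (simp add: smul_def algebra_simps)
lemma smul_addl: "smul (c + d) f = smul c f + smul d f" by (rule ext) (simp add: smul_def algebra_simps)
lemma smul_smul[simp]: "smul c (smul d f) = smul (c * d) f" by (rule ext) (simp add: smul_def algebra_simps)
lemma smul_m1[simp]: "smul (-1) f = - f" by (rule ext) (simp add: smul_def)
lemma smul_neg: "smul (- c) f = - smul c f" by (rule ext) (simp add: smul_def)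
end
lemma smul_sum: "smul c (sum F S) = (\<Sum>i\<in>S. smul c (F i :: ('v,'k::field) fv))"
  by (rule ext) (simp add: sum_fun_app sum_distrib_left)

lemma dl_apply: "dl t s = (if s = t then 1 else 0)" by (simp add: dl_def)

lemma brF_apply: "brF f g (Node s r) = f s * g r" "brF f g (Leaf x) = 0"
  by (auto simp: brF_def)

context fixes f g h :: "('v,'k::field) fv" begin
lemma brF_addl[simp]: "brF (f + g) h = brF f h + brF g h"
  by (rule ext, auto simp: brF_def algebra_simps split: ltree.split)
lemma brF_addr[simp]: "brF h (f + g) = brF h f + brF h g"
  by (rule ext, auto simp: brF_def algebra_simps split: ltree.split)
lemma brF_diffl[simp]: "brF (f - g) h = brF f h - brF g h"
  by (rule ext, auto simp: brF_def algebra_simps split: ltree.split)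
lemma brF_diffr[simp]: "brF h (f - g) = brF h f - brF h g"
  by (rule ext, auto simp: brF_def algebra_simps split: ltree.split)
lemma brF_uminusl[simp]: "brF (- f) h = - brF f h"
  by (rule ext, auto simp: brF_def algebra_simps split: ltree.split)
lemma brF_uminusr[simp]: "brF h (- f) = - brF h f"
  by (rule ext, auto simp: brF_def algebra_simps split: ltree.split)
lemma brF_smull[simp]: "brF (smul c f) h = smul c (brF f h)"
  by (rule ext, auto simp: brF_def algebra_simps split: ltree.split)
lemma brF_smulr[simp]: "brF h (smul c f) = smul c (brF h f)"
  by (rule ext, auto simp: brF_def algebra_simps split: ltree.split)
lemma brF_0l[simp]: "brF 0 h = 0"
  by (rule ext, auto simp: brF_def split: ltree.split)
lemma brF_0r[simp]: "brF h 0 = 0"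
  by (rule ext, auto simp: brF_def split: ltree.split)
end
lemma brF_dl[simp]: "brF (dl s) (dl t) = (dl (Node s t) :: ('v,'k::field) fv)"
  by (rule ext, auto simp: brF_def dl_def split: ltree.split)

lemma fs_0[simp]: "fs 0" by (simp add: fs_def)
lemma fs_dl[simp]: "fs (dl t :: ('v,'k::zero_neq_one) fv)"
proof -
  have "{s. (dl t :: ('v,'k) fv) s \<noteq> 0} \<subseteq> {t}" by (auto simp: dl_def)
  then show ?thesis unfolding fs_def using finite_subset by blast
qed
lemma fs_add[simp]: "fs f \<Longrightarrow> fs g \<Longrightarrow> fs (f + (g::('v,'k::monoid_add) fv))"
  unfolding fs_def by (rule finite_subset[of _ "{t. f t \<noteq> 0} \<union> {t. g t \<noteq> 0}"]) auto
lemma fs_uminus[simp]: "fs (- (f::('v,'k::group_add) fv)) = fs f"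
  unfolding fs_def by simp
lemma fs_diff[simp]: "fs f \<Longrightarrow> fs g \<Longrightarrow> fs (f - (g::('v,'k::group_add) fv))"
  unfolding fs_def by (rule finite_subset[of _ "{t. f t \<noteq> 0} \<union> {t. g t \<noteq> 0}"]) auto
lemma fs_smul[simp]: "fs f \<Longrightarrow> fs (smul c (f::('v,'k::field) fv))"
  unfolding fs_def by (rule finite_subset[of _ "{t. f t \<noteq> 0}"]) auto
lemma fs_sum[simp]: "(\<And>i. i \<in> S \<Longrightarrow> fs (F i)) \<Longrightarrow> fs (sum F S :: ('v,'k::field) fv)"
  by (induct S rule: infinite_finite_induct) auto
lemma fs_brF[simp]: "fs f \<Longrightarrow> fs g \<Longrightarrow> fs (brF f (g::('v,'k::field) fv))"
proof -
  assume a: "fs f" "fs g"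
  have "{t. brF f g t \<noteq> 0} \<subseteq> (\<lambda>(s,r). Node s r) ` ({t. f t \<noteq> 0} \<times> {t. g t \<noteq> 0})"
  proof
    fix t assume "t \<in> {t. brF f g t \<noteq> 0}"
    then show "t \<in> (\<lambda>(s,r). Node s r) ` ({t. f t \<noteq> 0} \<times> {t. g t \<noteq> 0})"
      by (cases t) (auto simp: brF_def)
  qed
  then show ?thesis using a unfolding fs_def by (meson finite_SigmaI finite_imageI finite_subset)
qed

lemma lx_superset:
  assumes "finite S" "{t. f t \<noteq> 0} \<subseteq> S"
  shows "lx T f = (\<Sum>t\<in>S. smul (f t) (T t))"
  unfolding lx_def by (rule sum.mono_neutral_left) (use assms in auto)

lemma lx_add: "fs f \<Longrightarrow> fs g \<Longrightarrow> lx T (f + g) = lx T f + lx T g"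
proof -
  assume a: "fs f" "fs g"
  let ?S = "{t. f t \<noteq> 0} \<union> {t. g t \<noteq> 0}"
  have fin: "finite ?S" using a by (simp add: fs_def)
  have "lx T (f + g) = (\<Sum>t\<in>?S. smul ((f+g) t) (T t))" by (rule lx_superset[OF fin]) auto
  also have "\<dots> = (\<Sum>t\<in>?S. smul (f t) (T t)) + (\<Sum>t\<in>?S. smul (g t) (T t))"
    by (simp add: smul_addl sum.distrib)
  also have "\<dots> = lx T f + lx T g"
    by (subst (1 2) lx_superset[OF fin]) auto
  finally show ?thesis .
qed

lemma lx_smul: "lx T (smul c f) = smul c (lx T f)"
proof (cases "c = 0")
  case True then show ?thesis by (simp add: lx_def)
next
  case False
  then have "{t. smul c f t \<noteq> 0} = {t. f t \<noteq> 0}" by auto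
  then show ?thesis by (simp add: lx_def smul_sum)
qed

lemma lx_0[simp]: "lx T 0 = 0" by (simp add: lx_def)

lemma lx_dl[simp]: fixes T :: "'v ltree \<Rightarrow> ('w,'k::field) fv" shows "lx T (dl t) = T t"
proof -
  have "{s. (dl t :: ('v,'k) fv) s \<noteq> 0} = {t}" by (auto simp: dl_def)
  then show ?thesis by (simp add: lx_def dl_def)
qed

lemma lx_uminus: "lx T (- f) = - lx T f"
  using lx_smul[of T "-1" f] by simp

lemma lx_diff: "fs f \<Longrightarrow> fs g \<Longrightarrow> lx T (f - g) = lx T f - lx T g"
  using lx_add[of f "-g" T] by (simp add: lx_uminus)

lemma fs_lx[simp]: "(\<And>t. fs (T t)) \<Longrightarrow> fs (lx T f)"
  unfolding lx_def by (rule fs_sum) simp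

lemma fs_induct[consumes 1, case_names zero step]:
  assumes "fs f" "P 0"
    and step: "\<And>c s h. fs h \<Longrightarrow> P h \<Longrightarrow> P (smul c (dl s) + h)"
  shows "P (f :: ('v,'k::field) fv)"
proof -
  have "\<And>f. {t. f t \<noteq> 0} \<subseteq> S \<Longrightarrow> P (f :: ('v,'k) fv)" if "finite S" for S
    using that
  proof (induct S rule: finite_induct)
    case empty
    then have "f = 0" by (intro ext) auto
    then have "P f" using \<open>P 0\<close> by simp
    then show ?case .
  next
    case (insert s S)
    let ?h = "f(s := 0)"
    have "{t. ?h t \<noteq> 0} \<subseteq> S" using insert.prems by auto
    then have Ph: "P ?h" by (rule insert.hyps(3))
    have fh: "fs ?h" unfolding fs_def using \<open>{t. ?h t \<noteq> 0} \<subseteq> S\<close> insert.hyps(1) finite_subset by blast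
    have "f = smul (f s) (dl s) + ?h" by (rule ext) (auto simp: dl_def)
    then show ?case using step[OF fh Ph] by metis
  qed
  then show ?thesis using assms(1) unfolding fs_def by blast
qed

lemma lx_linear_comp:
  assumes add: "\<And>x y. fs x \<Longrightarrow> fs y \<Longrightarrow> L (x + y) = L x + L y"
    and sm: "\<And>c x. fs x \<Longrightarrow> L (smul c x) = smul c (L x)"
    and z: "L 0 = 0"
    and fsT: "\<And>t. fs (T t)"
    and "fs f"
  shows "lx (\<lambda>t. L (T t)) f = L (lx T f)"
  using \<open>fs f\<close>
proof (induct rule: fs_induct[where P="\<lambda>f. lx (\<lambda>t. L (T t)) f = L (lx T f)"])
  case zero then show ?case using z by simp
next
  case (step c s h)
  have "lx (\<lambda>t. L (T t)) (smul c (dl s) + h) = smul c (L (T s)) + lx (\<lambda>t. L (T t)) h"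
    using step by (simp add: lx_add lx_smul)
  also have "\<dots> = L (lx T (smul c (dl s) + h))"
    using step by (simp add: lx_add lx_smul add sm fsT)
  finally show ?case .
qed


lemma lx_dl_id: "fs f \<Longrightarrow> lx dl f = (f :: ('v,'k::field) fv)"
proof (rule ext)
  fix x assume "fs f"
  have "lx dl f x = (\<Sum>t\<in>{t. f t \<noteq> 0}. f t * dl t x)"
    by (simp add: lx_def sum_fun_app)
  also have "\<dots> = (\<Sum>t\<in>{t. f t \<noteq> 0}. if t = x then f x else 0)"
    by (rule sum.cong) (auto simp: dl_def)
  also have "\<dots> = f x" using \<open>fs f\<close> by (simp add: fs_def)
  finally show "lx dl f x = f x" .
qed

lemma gspan_sum: "(\<And>i. i \<in> S \<Longrightarrow> F i \<in> gspan 0 (+) sm A) \<Longrightarrow> sum F S \<in> gspan 0 (+) sm A"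
  by (induct S rule: infinite_finite_induct) (auto intro: gspan.intros)

lemma nlv_pos: "1 \<le> nlv t" by (induct t) auto

lemma FT_induct[consumes 1, case_names zero base add smul]:
  assumes "f \<in> FT n" "P 0" "\<And>t. nlv t = n \<Longrightarrow> P (dl t)"
    "\<And>f g. f \<in> FT n \<Longrightarrow> g \<in> FT n \<Longrightarrow> P f \<Longrightarrow> P g \<Longrightarrow> P (f + g)"
    "\<And>c f. f \<in> FT n \<Longrightarrow> P f \<Longrightarrow> P (smul c f)"
  shows "P f"
  using assms(1) unfolding FT_def
proof (induct rule: gspan.induct)
  case gspan_zero show ?case by (rule assms(2))
next
  case (gspan_base x) then show ?case using assms(3) by auto
next
  case (gspan_add x y) then show ?case using assms(4) unfolding FT_def by blast
next
  case (gspan_smul x c) then show ?case using assms(5) unfolding FT_def by blast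
qed

lemma FT_fs: "f \<in> FT n \<Longrightarrow> fs f"
  by (induct rule: FT_induct[where P="\<lambda>x. fs x"]) simp_all

lemma FT_supp0: "f \<in> FT n \<Longrightarrow> f t \<noteq> 0 \<longrightarrow> nlv t = n"
proof (induct rule: FT_induct[where P="\<lambda>x. x t \<noteq> 0 \<longrightarrow> nlv t = n"])
  case zero then show ?case by simp
next
  case (base s) then show ?case by (simp add: dl_def split: if_splits)
next
  case (smul c f) then show ?case by simp
next
  case (add f g) then show ?case by (cases "f t = 0") auto
qed

lemma FT_supp: "f \<in> FT n \<Longrightarrow> f t \<noteq> 0 \<Longrightarrow> nlv t = n"
  using FT_supp0 by blast

lemma FT_0[simp]: "0 \<in> FT n" unfolding FT_def by (rule gspan_zero)
lemma FT_dl: "nlv t = n \<Longrightarrow> dl t \<in> FT n" unfolding FT_def by (auto intro: gspan_base)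
lemma FT_add: "f \<in> FT n \<Longrightarrow> g \<in> FT n \<Longrightarrow> f + g \<in> FT n" unfolding FT_def by (rule gspan_add)
lemma FT_smul: "f \<in> FT n \<Longrightarrow> smul c f \<in> FT n" unfolding FT_def by (rule gspan_smul)
lemma FT_uminus: "f \<in> FT n \<Longrightarrow> - f \<in> FT n" using FT_smul[of f n "-1"] by simp
lemma FT_diff: "f \<in> FT n \<Longrightarrow> g \<in> FT n \<Longrightarrow> f - g \<in> FT n"
  using FT_add[OF _ FT_uminus] by (metis diff_conv_add_uminus)
lemma FT_sum: "(\<And>i. i \<in> S \<Longrightarrow> F i \<in> FT n) \<Longrightarrow> sum F S \<in> FT n"
  unfolding FT_def by (rule gspan_sum)

lemma FT_char: "f \<in> FT n \<longleftrightarrow> fs f \<and> (\<forall>t. f t \<noteq> 0 \<longrightarrow> nlv t = n)"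
proof
  assume "f \<in> FT n" then show "fs f \<and> (\<forall>t. f t \<noteq> 0 \<longrightarrow> nlv t = n)"
    using FT_fs FT_supp by blast
next
  assume a: "fs f \<and> (\<forall>t. f t \<noteq> 0 \<longrightarrow> nlv t = n)"
  then have "lx dl f \<in> FT n" unfolding lx_def by (intro FT_sum FT_smul FT_dl) auto
  then show "f \<in> FT n" using a lx_dl_id by metis
qed

lemma FT_zero_deg: "f \<in> FT 0 \<Longrightarrow> f = 0"
  using FT_supp nlv_pos by (metis not_one_le_zero ext zero_fun_apply)

lemma brF_FT: "f \<in> FT i \<Longrightarrow> g \<in> FT j \<Longrightarrow> brF f g \<in> FT (i + j)"
  unfolding FT_char
proof (intro conjI allI impI)
  fix t assume a: "fs f \<and> (\<forall>t. f t \<noteq> 0 \<longrightarrow> nlv t = i)" "fs g \<and> (\<forall>t. g t \<noteq> 0 \<longrightarrow> nlv t = j)"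
    "brF f g t \<noteq> 0"
  then show "nlv t = i + j" by (cases t) (auto simp: brF_def)
qed (auto)

lemma actF_lx: "actF act a f = lx (actTree act a) f"
  unfolding actF_def lx_def by (rule refl)

lemma actTree_FT: "(actTree act a t :: ('v,'k::field) fv) \<in> FT (nlv t)"
proof (induct t rule: ltree.induct[where P="\<lambda>t. (actTree act a t :: ('v,'k::field) fv) \<in> FT (nlv t)"])
  case (Leaf x) then show ?case by (auto intro: FT_dl)
next
  case (Node s r)
  have "brF (actTree act a s) (dl r) \<in> (FT (nlv s + nlv r) :: ('v,'k) fv set)" using brF_FT[OF Node(1) FT_dl[of r "nlv r"]] by simp
  moreover have "brF (dl s) (actTree act a r) \<in> (FT (nlv s + nlv r) :: ('v,'k) fv set)" using brF_FT[OF FT_dl[of s "nlv s"] Node(2)] by simp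
  ultimately show ?case by (simp add: FT_add)
qed

lemma fs_actTree[simp]: "fs (actTree act a t)" by (rule FT_fs[OF actTree_FT])
lemma fs_actF[simp]: "fs (actF act a f)" by (simp add: actF_lx)

lemma actF_dl[simp]: "actF act a (dl t) = actTree act a t" by (simp add: actF_lx)
lemma actF_0[simp]: "actF act a 0 = 0" by (simp add: actF_lx)
lemma actF_add: "fs f \<Longrightarrow> fs g \<Longrightarrow> actF act a (f + g) = actF act a f + actF act a g"
  by (simp add: actF_lx lx_add)
lemma actF_diff: "fs f \<Longrightarrow> fs g \<Longrightarrow> actF act a (f - g) = actF act a f - actF act a g"
  by (simp add: actF_lx lx_diff)
lemma actF_smul: "actF act a (smul c f) = smul c (actF act a f)"
  by (simp add: actF_lx lx_smul)
lemma actF_uminus: "actF act a (- f) = - actF act a f"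
  by (simp add: actF_lx lx_uminus)

lemma actF_FT: "(f :: ('v,'k::field) fv) \<in> FT n \<Longrightarrow> actF act a f \<in> FT n"
proof (induct rule: FT_induct[where P="\<lambda>x. actF act a x \<in> FT n"])
  case (base t) then show ?case using actTree_FT[of act a t, where 'k='k] by simp
next
  case (add f g)
  show ?case unfolding actF_add[OF FT_fs[OF add(1)] FT_fs[OF add(2)]] by (rule FT_add[OF add(3,4)])
next
  case (smul c f) show ?case unfolding actF_smul by (rule FT_smul[OF smul(2)])
qed simp

lemma actF_brF_dl: "fs g \<Longrightarrow> actF act a (brF (dl s) g) = brF (actTree act a s) g + brF (dl s) (actF act a g)"
proof (induct rule: fs_induct[where P="\<lambda>g. actF act a (brF (dl s) g) = brF (actTree act a s) g + brF (dl s) (actF act a g)"])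
  case zero then show ?case by simp
next
  case (step c r h)
  then show ?case by (simp add: actF_add actF_smul smul_add)
qed

lemma actF_brF: assumes "fs f" "fs g" shows "actF act a (brF f g) = brF (actF act a f) g + brF f (actF act a g)"
  using assms(1) proof (induct rule: fs_induct[where P="\<lambda>f. actF act a (brF f g) = brF (actF act a f) g + brF f (actF act a g)"])
  case zero then show ?case by simp
next
  case (step c s h)
  then show ?case using assms(2) by (simp add: actF_add actF_smul actF_brF_dl smul_add)
qed


lemma sgnk_sq[simp]: "sgnk n * sgnk n = (1::'k::field)"
  by (simp add: sgnk_def power_mult_distrib[symmetric])
lemma sgnk_1[simp]: "sgnk 1 = (-1::'k::field)" by (simp add: sgnk_def)
lemma sgnk_Suc0[simp]: "sgnk (Suc 0) = (-1::'k::field)" by (simp add: sgnk_def)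

lemma Iid_diff: "f \<in> Iid sv \<Longrightarrow> g \<in> Iid sv \<Longrightarrow> f - g \<in> Iid sv"
  using Iid_add[of f sv "smul (-1) g"] Iid_smul[of g sv "-1"] by simp
lemma Iid_uminus: "f \<in> Iid sv \<Longrightarrow> - f \<in> Iid sv"
  using Iid_smul[of f sv "-1"] by simp

lemma relgens_fs: "f \<in> relgens sv \<Longrightarrow> fs f"
  unfolding relgens_def by auto

lemma Iid_fs: "f \<in> Iid sv \<Longrightarrow> fs f"
  by (induct rule: Iid.induct[where P="\<lambda>f. fs f"]) (auto simp: relgens_fs)

lemma Iid_brl_fs:
  assumes "fs g" "f \<in> Iid sv" shows "brF g f \<in> Iid sv"
  using assms(1)
proof (induct rule: fs_induct[where P="\<lambda>g. brF g f \<in> Iid sv"])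
  case zero then show ?case by (simp add: Iid_zero)
next
  case (step c s h) then show ?case using assms(2) by (simp add: Iid_add Iid_smul Iid_brl)
qed

lemma Iid_brr_fs:
  assumes "fs g" "f \<in> Iid sv" shows "brF f g \<in> Iid sv"
  using assms(1)
proof (induct rule: fs_induct[where P="\<lambda>g. brF f g \<in> Iid sv"])
  case zero then show ?case by (simp add: Iid_zero)
next
  case (step c s h) then show ?case using assms(2) by (simp add: Iid_add Iid_smul Iid_brr)
qed

lemma antisym_Iid:
  assumes "(f :: ('v,'k::field) fv) \<in> FT j"
  shows "brF f (dl s) + smul (sgnk (j * nlv s)) (brF (dl s) f) \<in> Iid (sv :: 'k \<Rightarrow> 'v::ab_group_add \<Rightarrow> 'v)"
  using assms
proof (induct rule: FT_induct[where P="\<lambda>f. brF f (dl s) + smul (sgnk (j * nlv s)) (brF (dl s) f) \<in> Iid sv"])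
  case zero then show ?case by (simp add: Iid_zero)
next
  case (base t)
  have "brF (dl t) (dl s) + smul (sgnk (nlv t * nlv s)) (brF (dl s) (dl t)) \<in> relgens sv"
    unfolding relgens_def by blast
  then show ?case using base by (simp add: Iid_gen)
next
  case (add f g)
  have "brF (f + g) (dl s) + smul (sgnk (j * nlv s)) (brF (dl s) (f + g))
     = (brF f (dl s) + smul (sgnk (j * nlv s)) (brF (dl s) f)) + (brF g (dl s) + smul (sgnk (j * nlv s)) (brF (dl s) g))"
    by (simp add: smul_add algebra_simps)
  then show ?case using add(3,4) Iid_add by metis
next
  case (smul c f)
  have "brF (smul c f) (dl s) + smul (sgnk (j * nlv s)) (brF (dl s) (smul c f))
     = smul c (brF f (dl s) + smul (sgnk (j * nlv s)) (brF (dl s) f))"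
    by (simp add: smul_add mult.commute)
  then show ?case using smul(2) Iid_smul by metis
qed

definition Jac :: "nat \<Rightarrow> nat \<Rightarrow> ('v,'k::field) fv \<Rightarrow> ('v,'k) fv \<Rightarrow> ('v,'k) fv \<Rightarrow> ('v,'k) fv" where
  "Jac p q f g h = brF f (brF g h) - brF (brF f g) h - smul (sgnk (p * q)) (brF g (brF f h))"

lemma Jac_add1: "Jac p q (f1 + f2) g h = Jac p q f1 g h + Jac p q f2 g h"
  by (simp add: Jac_def smul_add algebra_simps)
lemma Jac_add2: "Jac p q f (g1 + g2) h = Jac p q f g1 h + Jac p q f g2 h"
  by (simp add: Jac_def smul_add algebra_simps)
lemma Jac_add3: "Jac p q f g (h1 + h2) = Jac p q f g h1 + Jac p q f g h2"
  by (simp add: Jac_def smul_add algebra_simps)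
lemma Jac_smul1: "Jac p q (smul c f) g h = smul c (Jac p q f g h)"
  by (simp add: Jac_def smul_diff mult.commute)
lemma Jac_smul2: "Jac p q f (smul c g) h = smul c (Jac p q f g h)"
  by (simp add: Jac_def smul_diff mult.commute)
lemma Jac_smul3: "Jac p q f g (smul c h) = smul c (Jac p q f g h)"
  by (simp add: Jac_def smul_diff mult.commute)
lemma Jac_0[simp]: "Jac p q 0 g h = 0" "Jac p q f 0 h = 0" "Jac p q f g 0 = 0"
  by (simp_all add: Jac_def)

lemma Jac_dl_Iid: "Jac (nlv s) (nlv t) (dl s) (dl t) (dl r) \<in> Iid sv"
proof -
  have "Jac (nlv s) (nlv t) (dl s) (dl t) (dl r) \<in> relgens sv"
    unfolding relgens_def Jac_def by blast
  then show ?thesis by (rule Iid_gen)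
qed

lemma Jac_Iid:
  assumes f: "(f :: ('v,'k::field) fv) \<in> FT p" and g: "g \<in> FT q" and h: "h \<in> FT r"
  shows "Jac p q f g h \<in> Iid (sv :: 'k \<Rightarrow> 'v::ab_group_add \<Rightarrow> 'v)"
proof -
  have L3: "Jac p q (dl s) (dl t) h \<in> Iid sv" if "nlv s = p" "nlv t = q" for s t
    using h
  proof (induct rule: FT_induct[where P="\<lambda>h. Jac p q (dl s) (dl t) h \<in> Iid sv"])
    case zero then show ?case by (simp add: Iid_zero)
  next
    case (base u) then show ?case using Jac_dl_Iid[of s t u sv] that by simp
  next
    case (add h1 h2) then show ?case by (simp add: Jac_add3 Iid_add)
  next
    case (smul c h) then show ?case by (simp add: Jac_smul3 Iid_smul)
  qed
  have L2: "Jac p q (dl s) g h \<in> Iid sv" if "nlv s = p" for s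
    using g
  proof (induct rule: FT_induct[where P="\<lambda>g. Jac p q (dl s) g h \<in> Iid sv"])
    case zero then show ?case by (simp add: Iid_zero)
  next
    case (base u) then show ?case using L3[OF that] by simp
  next
    case (add h1 h2) then show ?case by (simp add: Jac_add2 Iid_add)
  next
    case (smul c h) then show ?case by (simp add: Jac_smul2 Iid_smul)
  qed
  show ?thesis
    using f
  proof (induct rule: FT_induct[where P="\<lambda>f. Jac p q f g h \<in> Iid sv"])
    case zero then show ?case by (simp add: Iid_zero)
  next
    case (base u) then show ?case using L2 by simp
  next
    case (add h1 h2) then show ?case by (simp add: Jac_add1 Iid_add)
  next
    case (smul c h) then show ?case by (simp add: Jac_smul1 Iid_smul)
  qed
qed

lemma actF_Iid:
  fixes sv :: "'k::field \<Rightarrow> 'v \<Rightarrow> 'v::ab_group_add" and act :: "'g \<Rightarrow> 'v \<Rightarrow> 'v"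
  assumes lin: "\<And>a c x y. act a (sv c x + y) = sv c (act a x) + act a y"
    and "f \<in> Iid sv"
  shows "actF act a f \<in> Iid sv"
  using assms(2)
proof (induct rule: Iid.induct[where P="\<lambda>f. actF act a f \<in> Iid sv"])
  case (Iid_gen f)
  then consider (L) c x y where "f = dl (Leaf (sv c x + y)) - smul c (dl (Leaf x)) - dl (Leaf y)"
    | (A) s t where "f = brF (dl s) (dl t) + smul (sgnk (nlv s * nlv t)) (brF (dl t) (dl s))"
    | (J) s t r where "f = Jac (nlv s) (nlv t) (dl s) (dl t) (dl r)"
    unfolding relgens_def Jac_def by blast
  then show ?case
  proof cases
    case L
    have "actF act a f = dl (Leaf (sv c (act a x) + act a y)) - smul c (dl (Leaf (act a x))) - dl (Leaf (act a y))"
      using L by (simp add: actF_diff actF_smul lin)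
    also have "\<dots> \<in> relgens sv" unfolding relgens_def by blast
    finally show ?thesis by (rule Iid.Iid_gen)
  next
    case A
    let ?s = "sgnk (nlv s * nlv t) :: 'k"
    have "actF act a f = (brF (actTree act a s) (dl t) + smul (sgnk (nlv s * nlv t)) (brF (dl t) (actTree act a s)))
       + smul ?s (brF (actTree act a t) (dl s) + smul (sgnk (nlv t * nlv s)) (brF (dl s) (actTree act a t)))"
      unfolding A by (simp add: actF_add actF_smul actF_brF smul_add algebra_simps mult.commute)
    moreover have "brF (actTree act a s) (dl t) + smul (sgnk (nlv s * nlv t)) (brF (dl t) (actTree act a s)) \<in> Iid sv"
      by (rule antisym_Iid[OF actTree_FT])
    moreover have "brF (actTree act a t) (dl s) + smul (sgnk (nlv t * nlv s)) (brF (dl s) (actTree act a t)) \<in> Iid sv"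
      by (rule antisym_Iid[OF actTree_FT])
    ultimately show ?thesis by (metis Iid.Iid_add Iid.Iid_smul)
  next
    case J
    have "actF act a f = Jac (nlv s) (nlv t) (actTree act a s) (dl t) (dl r)
        + Jac (nlv s) (nlv t) (dl s) (actTree act a t) (dl r) + Jac (nlv s) (nlv t) (dl s) (dl t) (actTree act a r)"
      unfolding J by (simp add: Jac_def actF_add actF_diff actF_smul actF_brF smul_add smul_diff algebra_simps)
    moreover have "Jac (nlv s) (nlv t) (actTree act a s) (dl t) (dl r) \<in> Iid sv"
      by (rule Jac_Iid[OF actTree_FT FT_dl FT_dl]) simp_all
    moreover have "Jac (nlv s) (nlv t) (dl s) (actTree act a t) (dl r) \<in> Iid sv"
      by (rule Jac_Iid[OF FT_dl actTree_FT FT_dl]) simp_all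
    moreover have "Jac (nlv s) (nlv t) (dl s) (dl t) (actTree act a r) \<in> Iid sv"
      by (rule Jac_Iid[OF FT_dl FT_dl actTree_FT]) simp_all
    ultimately show ?thesis by (metis Iid.Iid_add)
  qed
next
  case Iid_zero then show ?case by (simp add: Iid.Iid_zero)
next
  case (Iid_add f h)
  have "actF act a (f + h) = actF act a f + actF act a h" by (rule actF_add[OF Iid_fs[OF Iid_add(1)] Iid_fs[OF Iid_add(3)]])
  then show ?case using Iid_add(2,4) by (simp add: Iid.Iid_add)
next
  case (Iid_smul f c) then show ?case by (simp add: actF_smul Iid.Iid_smul)
next
  case (Iid_brl f p)
  have "actF act a (brF (dl p) f) = brF (actTree act a p) f + brF (dl p) (actF act a f)"
    using actF_brF[OF fs_dl Iid_fs[OF Iid_brl(1)], of act a p] by simp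
  then show ?case using Iid_brl by (simp add: Iid.Iid_add Iid.Iid_brl Iid_brl_fs)
next
  case (Iid_brr f p)
  have "actF act a (brF f (dl p)) = brF (actF act a f) (dl p) + brF f (actTree act a p)"
    using actF_brF[OF Iid_fs[OF Iid_brr(1)] fs_dl, of act a p] by simp
  then show ?case using Iid_brr by (simp add: Iid.Iid_add Iid.Iid_brr Iid_brr_fs)
qed


definition Lf :: "('k::field \<Rightarrow> 'v \<Rightarrow> 'v::ab_group_add) \<Rightarrow> ('w ltree \<Rightarrow> 'v) \<Rightarrow> ('w,'k) fv \<Rightarrow> 'v" where
  "Lf sv l f = (\<Sum>t\<in>{t. f t \<noteq> 0}. sv (f t) (l t))"

lemma nlv_1: "nlv t = 1 \<Longrightarrow> \<exists>u. t = Leaf u"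
proof (cases t)
  case (Node a b) assume "nlv t = 1"
  then show ?thesis using Node nlv_pos[of a] nlv_pos[of b] by simp
qed simp

definition adm :: "('k::field \<Rightarrow> 'v \<Rightarrow> 'v::ab_group_add) \<Rightarrow> ('v ltree \<Rightarrow> 'v) \<Rightarrow> bool" where
  "adm sv l \<longleftrightarrow> (\<forall>t. 3 \<le> nlv t \<longrightarrow> l t = 0)
     \<and> (\<forall>c x y. l (Leaf (sv c x + y)) = sv c (l (Leaf x)) + l (Leaf y))
     \<and> (\<forall>u v. l (Node (Leaf u) (Leaf v)) = l (Node (Leaf v) (Leaf u)))
     \<and> (\<forall>u c x y. l (Node (Leaf u) (Leaf (sv c x + y))) = sv c (l (Node (Leaf u) (Leaf x))) + l (Node (Leaf u) (Leaf y)))"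

context
  fixes sv :: "'k::field \<Rightarrow> 'v \<Rightarrow> 'v::ab_group_add"
  assumes VS: "Vector_Spaces.vector_space sv"
begin

interpretation V: Vector_Spaces.vector_space sv by (rule VS)

lemma Lf_superset:
  assumes "finite S" "{t. f t \<noteq> 0} \<subseteq> S"
  shows "Lf sv l f = (\<Sum>t\<in>S. sv (f t) (l t))"
  unfolding Lf_def by (rule sum.mono_neutral_left) (use assms in auto)

lemma Lf_add: "fs f \<Longrightarrow> fs g \<Longrightarrow> Lf sv l (f + g) = Lf sv l f + Lf sv l g"
proof -
  assume a: "fs f" "fs g"
  let ?S = "{t. f t \<noteq> 0} \<union> {t. g t \<noteq> 0}"
  have fin: "finite ?S" using a by (simp add: fs_def)
  have "Lf sv l (f + g) = (\<Sum>t\<in>?S. sv ((f+g) t) (l t))" by (rule Lf_superset[OF fin]) auto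
  also have "\<dots> = (\<Sum>t\<in>?S. sv (f t) (l t)) + (\<Sum>t\<in>?S. sv (g t) (l t))"
    by (simp add: V.scale_left_distrib sum.distrib)
  also have "\<dots> = Lf sv l f + Lf sv l g"
    by (subst (1 2) Lf_superset[OF fin]) auto
  finally show ?thesis .
qed

lemma Lf_smul: "Lf sv l (smul c f) = sv c (Lf sv l f)"
proof (cases "c = 0")
  case True then show ?thesis by (simp add: Lf_def)
next
  case False
  then have "{t. smul c f t \<noteq> 0} = {t. f t \<noteq> 0}" by auto
  then show ?thesis by (simp add: Lf_def V.scale_sum_right)
qed

lemma Lf_0[simp]: "Lf sv l 0 = 0" by (simp add: Lf_def)

lemma Lf_dl[simp]: fixes l :: "'w ltree \<Rightarrow> 'v" shows "Lf sv l (dl t) = l t"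
proof -
  have "{s. (dl t :: ('w,'k) fv) s \<noteq> 0} = {t}" by (auto simp: dl_def)
  then show ?thesis by (simp add: Lf_def dl_def)
qed

lemma Lf_diff: "fs f \<Longrightarrow> fs g \<Longrightarrow> Lf sv l (f - g) = Lf sv l f - Lf sv l g"
  using Lf_add[of f "smul (-1) g" l] Lf_smul[of l "-1" g] by simp

lemma Lf_brl:
  assumes "fs f" shows "Lf sv l (brF (dl p) f) = Lf sv (\<lambda>r. l (Node p r)) f"
  using assms
proof (induct rule: fs_induct[where P="\<lambda>f. Lf sv l (brF (dl p) f) = Lf sv (\<lambda>r. l (Node p r)) f"])
  case zero then show ?case by simp
next
  case (step c s h) then show ?case by (simp add: Lf_add Lf_smul)
qed

lemma Lf_brr:
  assumes "fs f" shows "Lf sv l (brF f (dl p)) = Lf sv (\<lambda>r. l (Node r p)) f"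
  using assms
proof (induct rule: fs_induct[where P="\<lambda>f. Lf sv l (brF f (dl p)) = Lf sv (\<lambda>r. l (Node r p)) f"])
  case zero then show ?case by simp
next
  case (step c s h) then show ?case by (simp add: Lf_add Lf_smul)
qed

lemma adm_D: assumes "adm sv l"
  shows "\<And>t. 3 \<le> nlv t \<Longrightarrow> l t = 0"
    and "\<And>c x y. l (Leaf (sv c x + y)) = sv c (l (Leaf x)) + l (Leaf y)"
    and "\<And>u v. l (Node (Leaf u) (Leaf v)) = l (Node (Leaf v) (Leaf u))"
    and "\<And>u c x y. l (Node (Leaf u) (Leaf (sv c x + y))) = sv c (l (Node (Leaf u) (Leaf x))) + l (Node (Leaf u) (Leaf y))"
  using assms unfolding adm_def by blast+

lemma adm_brl: assumes "adm sv l" shows "adm sv (\<lambda>r. l (Node p r))"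
proof -
  note D = adm_D[OF assms]
  have z: "3 \<le> nlv t \<Longrightarrow> l (Node p t) = 0" for t using D(1)[of "Node p t"] by simp
  have zz: "l (Node p (Node a b)) = 0" for a b using D(1)[of "Node p (Node a b)"] nlv_pos[of a] nlv_pos[of b] nlv_pos[of p] by simp
  have lin: "l (Node p (Leaf (sv c x + y))) = sv c (l (Node p (Leaf x))) + l (Node p (Leaf y))" for c x y
  proof (cases p)
    case (Leaf u) then show ?thesis using D(4) by simp
  next
    case (Node p1 p2)
    then have "l (Node p q) = 0" for q using D(1)[of "Node p q"] nlv_pos[of p1] nlv_pos[of p2] nlv_pos[of q] by simp
    then show ?thesis by simp
  qed
  show ?thesis unfolding adm_def using z zz lin by simp
qed

lemma adm_brr: assumes "adm sv l" shows "adm sv (\<lambda>r. l (Node r p))"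
proof -
  note D = adm_D[OF assms]
  have z: "3 \<le> nlv t \<Longrightarrow> l (Node t p) = 0" for t using D(1)[of "Node t p"] by simp
  have zz: "l (Node (Node a b) p) = 0" for a b using D(1)[of "Node (Node a b) p"] nlv_pos[of a] nlv_pos[of b] nlv_pos[of p] by simp
  have lin: "l (Node (Leaf (sv c x + y)) p) = sv c (l (Node (Leaf x) p)) + l (Node (Leaf y) p)" for c x y
  proof (cases p)
    case (Leaf u) then show ?thesis using D(3,4) by metis
  next
    case (Node p1 p2)
    then have "l (Node q p) = 0" for q using D(1)[of "Node q p"] nlv_pos[of p1] nlv_pos[of p2] nlv_pos[of q] by simp
    then show ?thesis by simp
  qed
  show ?thesis unfolding adm_def using z zz lin by simp
qed

lemma Lf_Iid: "f \<in> Iid sv \<Longrightarrow> \<forall>l. adm sv l \<longrightarrow> Lf sv l f = 0"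
proof (induct rule: Iid.induct[where P="\<lambda>f. \<forall>l. adm sv l \<longrightarrow> Lf sv l f = 0"])
  case (Iid_gen f)
  then consider (L) c x y where "f = dl (Leaf (sv c x + y)) - smul c (dl (Leaf x)) - dl (Leaf y)"
    | (A) s t where "f = brF (dl s) (dl t) + smul (sgnk (nlv s * nlv t)) (brF (dl t) (dl s))"
    | (J) s t r where "f = brF (dl s) (brF (dl t) (dl r)) - brF (brF (dl s) (dl t)) (dl r)
        - smul (sgnk (nlv s * nlv t)) (brF (dl t) (brF (dl s) (dl r)))"
    unfolding relgens_def by blast
  then show ?case
  proof cases
    case L then show ?thesis by (auto simp: adm_def Lf_diff Lf_smul)
  next
    case A
    show ?thesis
    proof (intro allI impI)
      fix l assume adm: "adm sv l"
      show "Lf sv l f = 0"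
      proof (cases "3 \<le> nlv s + nlv t")
        case True then show ?thesis using adm A by (simp add: adm_def Lf_add Lf_smul add.commute)
      next
        case False
        then have "nlv s = 1" "nlv t = 1" using nlv_pos[of s] nlv_pos[of t] by auto
        then obtain u v where "s = Leaf u" "t = Leaf v" using nlv_1 by metis
        then show ?thesis using adm A by (simp add: adm_def Lf_add Lf_diff Lf_smul)
      qed
    qed
  next
    case J
    show ?thesis
    proof (intro allI impI)
      fix l assume adm: "adm sv l"
      note D = adm_D[OF adm]
      have "l (Node s (Node t r)) = 0" "l (Node (Node s t) r) = 0" "l (Node t (Node s r)) = 0"
        using D(1)[of "Node s (Node t r)"] D(1)[of "Node (Node s t) r"] D(1)[of "Node t (Node s r)"]
          nlv_pos[of s] nlv_pos[of t] nlv_pos[of r] by simp_all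
      then show "Lf sv l f = 0" unfolding J by (simp add: Lf_diff Lf_smul)
    qed
  qed
next
  case Iid_zero then show ?case by simp
next
  case (Iid_add f h) then show ?case by (simp add: Lf_add Iid_fs)
next
  case (Iid_smul f c) then show ?case by (simp add: Lf_smul)
next
  case (Iid_brl f p) then show ?case by (simp add: Lf_brl Iid_fs adm_brl)
next
  case (Iid_brr f p) then show ?case by (simp add: Lf_brr Iid_fs adm_brr)
qed

end

lemma Phi_Lf: "Phi sv circ f = Lf sv (phiT sv circ) f"
  unfolding Phi_def Lf_def by (rule refl)

lemma Phi_Iid:
  fixes sv :: "'k::field \<Rightarrow> 'v \<Rightarrow> 'v::ab_group_add"
  assumes VS: "Vector_Spaces.vector_space sv" and LA: "leibniz_algebra sv circ"
    and "f \<in> Iid sv"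
  shows "Phi sv circ f = 0"
proof -
  interpret V: Vector_Spaces.vector_space sv by (rule VS)
  have lin: "circ x (sv c y + z) = sv c (circ x y) + circ x z" "circ (sv c y + z) x = sv c (circ y x) + circ z x" for x y z c
    using LA unfolding leibniz_algebra_def by auto
  have "adm sv (phiT sv circ)"
    unfolding adm_def
  proof (intro conjI allI impI)
    fix t :: "'v ltree" assume "3 \<le> nlv t"
    then show "phiT sv circ t = 0"
      by (cases "(sv, circ, t)" rule: phiT.cases) auto
  next
    fix u v show "phiT sv circ (Node (Leaf u) (Leaf v)) = phiT sv circ (Node (Leaf v) (Leaf u))"
      by (simp add: symprod_def add.commute)
  next
    fix u c x y
    show "phiT sv circ (Node (Leaf u) (Leaf (sv c x + y))) =
      sv c (phiT sv circ (Node (Leaf u) (Leaf x))) + phiT sv circ (Node (Leaf u) (Leaf y))"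
      by (simp add: symprod_def lin V.scale_right_distrib)
  qed simp
  then show ?thesis using Lf_Iid[OF VS assms(3)] Phi_Lf by metis
qed


locale LL =
  fixes sg :: "'k::field_char_0 \<Rightarrow> 'g \<Rightarrow> 'g::ab_group_add"
    and br :: "'g \<Rightarrow> 'g \<Rightarrow> 'g"
    and sv :: "'k \<Rightarrow> 'v \<Rightarrow> 'v::ab_group_add"
    and act :: "'g \<Rightarrow> 'v \<Rightarrow> 'v"
    and circ :: "'v \<Rightarrow> 'v \<Rightarrow> 'v"
    and Theta :: "'v \<Rightarrow> 'g"
  assumes LLT: "lie_leibniz_triple sg br sv act circ Theta"
begin

lemma VSg: "Vector_Spaces.vector_space sg" using LLT unfolding lie_leibniz_triple_def lie_algebra_def by blast
lemma VSv: "Vector_Spaces.vector_space sv" using LLT unfolding lie_leibniz_triple_def lie_module_def by blast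
lemma LA: "leibniz_algebra sv circ" using LLT unfolding lie_leibniz_triple_def by blast
lemma circ_act: "circ x y = act (Theta x) y" using LLT unfolding lie_leibniz_triple_def by blast

lemma act_addg: "act (a + b) x = act a x + act b x"
  and act_addv: "act a (x + y) = act a x + act a y"
  and act_smulg: "act (sg c a) x = sv c (act a x)"
  and act_smulv: "act a (sv c x) = sv c (act a x)"
  and act_br: "act (br a b) x = act a (act b x) - act b (act a x)"
  using LLT unfolding lie_leibniz_triple_def lie_module_def by blast+

interpretation V: Vector_Spaces.vector_space sv by (rule VSv)
interpretation G: Vector_Spaces.vector_space sg by (rule VSg)

lemma act_lin: "act a (sv c x + y) = sv c (act a x) + act a y"
  by (simp add: act_addv act_smulv)

lemma act_diffg: "act (a - b) x = act a x - act b x"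
  using act_addg[of "a - b" b x] by (simp add: algebra_simps)

lemma act_0g[simp]: "act 0 x = 0"
  using act_addg[of 0 0 x] by simp

abbreviation NN :: "('v,'k) fv set" where "NN \<equiv> Ntot sv act circ"
abbreviation K2 :: "('v,'k) fv set" where "K2 \<equiv> K2set sv act circ"
abbreviation II :: "('v,'k) fv set" where "II \<equiv> Iid sv"

lemma N_zero[simp]: "0 \<in> NN" unfolding Ntot_def by (rule gspan_zero)
lemma N_add: "f \<in> NN \<Longrightarrow> g \<in> NN \<Longrightarrow> f + g \<in> NN" unfolding Ntot_def by (rule gspan_add)
lemma N_smul: "f \<in> NN \<Longrightarrow> smul c f \<in> NN" unfolding Ntot_def by (rule gspan_smul)
lemma N_uminus: "f \<in> NN \<Longrightarrow> - f \<in> NN" using N_smul[of f "-1"] by simp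
lemma N_diff: "f \<in> NN \<Longrightarrow> g \<in> NN \<Longrightarrow> f - g \<in> NN"
  using N_add[OF _ N_uminus] by (metis diff_conv_add_uminus)
lemma N_Ndeg: "f \<in> Ndeg sv act circ i \<Longrightarrow> f \<in> NN" unfolding Ntot_def by (rule gspan_base) blast

lemma N_induct[consumes 1, case_names zero base add smul]:
  assumes "f \<in> NN" "P 0" "\<And>i f. f \<in> Ndeg sv act circ i \<Longrightarrow> P f"
    "\<And>f g. f \<in> NN \<Longrightarrow> g \<in> NN \<Longrightarrow> P f \<Longrightarrow> P g \<Longrightarrow> P (f + g)"
    "\<And>c f. f \<in> NN \<Longrightarrow> P f \<Longrightarrow> P (smul c f)"
  shows "P f"
  using assms(1) unfolding Ntot_def
proof (induct rule: gspan.induct)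
  case gspan_zero show ?case by (rule assms(2))
next
  case (gspan_base x) then show ?case using assms(3) by blast
next
  case (gspan_add x y) then show ?case using assms(4) unfolding Ntot_def by blast
next
  case (gspan_smul x c) then show ?case using assms(5) unfolding Ntot_def by blast
qed

lemma actF_II: "f \<in> II \<Longrightarrow> actF act a f \<in> II"
  by (rule actF_Iid[where sv=sv and act=act, OF act_lin])

lemma Iid_FT2_K2: "f \<in> II \<Longrightarrow> f \<in> FT 2 \<Longrightarrow> f \<in> K2"
proof -
  assume f: "f \<in> II" "f \<in> FT 2"
  let ?M = "II \<inter> FT 2"
  have "gspan 0 (+) smul ?M = ?M"
  proof
    show "gspan 0 (+) smul ?M \<subseteq> ?M"
    proof
      fix x assume "x \<in> gspan 0 (+) smul ?M"
      then show "x \<in> ?M"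
      proof (induct rule: gspan.induct[where P="\<lambda>x. x \<in> ?M"])
        case gspan_zero show ?case by (simp add: Iid_zero)
      next
        case (gspan_base x) then show ?case .
      next
        case (gspan_add x y) then show ?case by (simp add: Iid_add FT_add)
      next
        case (gspan_smul x c) then show ?case by (simp add: Iid_smul FT_smul)
      qed
    qed
  qed (auto intro: gspan_base)
  moreover have "\<forall>a. \<forall>m\<in>?M. actF act a m \<in> ?M"
  proof (intro allI ballI)
    fix a m assume "m \<in> ?M"
    then show "actF act a m \<in> ?M" using actF_II[of m a] actF_FT[of m 2 act a] by simp
  qed
  moreover have "\<forall>m\<in>?M. Phi sv circ m = 0"
  proof
    fix m assume "m \<in> ?M" then show "Phi sv circ m = 0" using Phi_Iid[OF VSv LA, of m] by simp
  qed
  ultimately have "?M \<in> {M. M \<subseteq> FT 2 \<and> Iid sv \<inter> FT 2 \<subseteq> M \<and> gspan 0 (+) smul M = M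
       \<and> (\<forall>a. \<forall>m\<in>M. actF act a m \<in> M) \<and> (\<forall>m\<in>M. Phi sv circ m = 0)}" by blast
  then show "f \<in> K2" unfolding K2set_def using f by blast
qed

lemma K2_FT: "f \<in> K2 \<Longrightarrow> f \<in> FT 2" unfolding K2set_def by blast
lemma K2_act: "f \<in> K2 \<Longrightarrow> actF act a f \<in> K2" unfolding K2set_def by blast

lemma KK_FT: "KK K2 II i f \<Longrightarrow> f \<in> FT i"
proof (induct rule: KK.induct[where P="\<lambda>i f. f \<in> FT i"])
  case (KK_two f) then show ?case by (rule K2_FT)
next
  case (KK_rel i f) then show ?case by simp
next
  case (KK_br i j p q) then show ?case using brF_FT[of p j q "i - j"] by simp
next
  case (KK_add i f h) then show ?case by (simp add: FT_add)
next
  case (KK_smul i f c) then show ?case by (simp add: FT_smul)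
qed

lemma Ndeg_FT: "f \<in> Ndeg sv act circ i \<Longrightarrow> f \<in> FT i"
  unfolding Ndeg_def by (auto split: if_splits intro: KK_FT)

lemma N_fs: "f \<in> NN \<Longrightarrow> fs f"
proof (induct rule: N_induct[where P="\<lambda>f. fs f"])
  case (base i f) then show ?case using FT_fs[OF Ndeg_FT] by simp
qed simp_all

lemma Iid_FT_N: "f \<in> II \<Longrightarrow> f \<in> FT j \<Longrightarrow> f \<in> NN"
proof -
  assume f: "f \<in> II" "f \<in> FT j"
  have "f \<in> Ndeg sv act circ j"
  proof (cases "j \<le> 1")
    case True then show ?thesis using f unfolding Ndeg_def by auto
  next
    case False
    show ?thesis
    proof (cases "j = 2")
      case True then show ?thesis using f Iid_FT2_K2 unfolding Ndeg_def by (auto intro: KK_two)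
    next
      case False then show ?thesis using f \<open>\<not> j \<le> 1\<close> unfolding Ndeg_def by (auto intro: KK_rel)
    qed
  qed
  then show ?thesis by (rule N_Ndeg)
qed

lemma Ndeg_brl: "m \<in> Ndeg sv act circ i \<Longrightarrow> brF (dl s) m \<in> NN"
proof (cases "2 \<le> i")
  case True
  assume m: "m \<in> Ndeg sv act circ i"
  then have kk: "KK K2 II i m" using True unfolding Ndeg_def by simp
  have "KK K2 II (nlv s + i) (brF (dl s) m)"
    using KK_br[of "nlv s + i" "nlv s" "dl s" K2 II m] kk True nlv_pos[of s] by (simp add: FT_dl)
  then have "brF (dl s) m \<in> Ndeg sv act circ (nlv s + i)" using True unfolding Ndeg_def by simp
  then show ?thesis by (rule N_Ndeg)
next
  case False
  assume m: "m \<in> Ndeg sv act circ i"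
  then have "m \<in> II" "m \<in> FT i" using False unfolding Ndeg_def by auto
  then show ?thesis using Iid_FT_N[OF Iid_brl[of m sv s] brF_FT[OF FT_dl[of s "nlv s"]]] by simp
qed

lemma Ndeg_brr: "m \<in> Ndeg sv act circ i \<Longrightarrow> brF m (dl s) \<in> NN"
proof (cases "2 \<le> i")
  case True
  assume m: "m \<in> Ndeg sv act circ i"
  have mF: "m \<in> FT i" using Ndeg_FT[OF m] .
  let ?a = "brF m (dl s) + smul (sgnk (i * nlv s)) (brF (dl s) m)"
  have a1: "?a \<in> II" by (rule antisym_Iid[OF mF])
  have a2: "?a \<in> FT (i + nlv s)"
    using brF_FT[OF mF FT_dl[of s "nlv s"]] brF_FT[OF FT_dl[of s "nlv s"] mF]
    by (simp add: FT_add FT_smul add.commute)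
  have "?a \<in> NN" using Iid_FT_N[OF a1 a2] .
  moreover have "smul (sgnk (i * nlv s)) (brF (dl s) m) \<in> NN" using Ndeg_brl[OF m] by (rule N_smul)
  ultimately have "?a - smul (sgnk (i * nlv s)) (brF (dl s) m) \<in> NN" by (rule N_diff)
  then show ?thesis by simp
next
  case False
  assume m: "m \<in> Ndeg sv act circ i"
  then have "m \<in> II" "m \<in> FT i" using False unfolding Ndeg_def by auto
  then show ?thesis using Iid_FT_N[OF Iid_brr[of m sv s] brF_FT[OF _ FT_dl[of s "nlv s"]]] by simp
qed

lemma N_brl_dl: "n \<in> NN \<Longrightarrow> brF (dl s) n \<in> NN"
proof (induct rule: N_induct[where P="\<lambda>n. brF (dl s) n \<in> NN"])
  case (base i f) then show ?case by (rule Ndeg_brl)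
next
  case (add f g) then show ?case by (simp add: N_add)
next
  case (smul c f) then show ?case by (simp add: N_smul)
qed simp

lemma N_brr_dl: "n \<in> NN \<Longrightarrow> brF n (dl s) \<in> NN"
proof (induct rule: N_induct[where P="\<lambda>n. brF n (dl s) \<in> NN"])
  case (base i f) then show ?case by (rule Ndeg_brr)
next
  case (add f g) then show ?case by (simp add: N_add)
next
  case (smul c f) then show ?case by (simp add: N_smul)
qed simp

lemma N_brl: assumes "fs p" "n \<in> NN" shows "brF p n \<in> NN"
  using assms(1)
proof (induct rule: fs_induct[where P="\<lambda>p. brF p n \<in> NN"])
  case (step c s h) then show ?case using N_brl_dl[OF assms(2)] by (simp add: N_add N_smul)
qed simp

lemma N_brr: assumes "fs p" "n \<in> NN" shows "brF n p \<in> NN"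
  using assms(1)
proof (induct rule: fs_induct[where P="\<lambda>p. brF n p \<in> NN"])
  case (step c s h) then show ?case using N_brr_dl[OF assms(2)] by (simp add: N_add N_smul)
qed simp

lemma KK_act: "KK K2 II i f \<Longrightarrow> KK K2 II i (actF act a f)"
proof (induct rule: KK.induct[where P="\<lambda>i f. KK K2 II i (actF act a f)"])
  case (KK_two f) then show ?case by (simp add: K2_act KK.KK_two)
next
  case (KK_rel i f) then show ?case by (simp add: actF_II actF_FT KK.KK_rel)
next
  case (KK_br i j p q)
  have fq: "fs q" using FT_fs[OF KK_FT[OF KK_br(5)]] .
  have eq: "actF act a (brF p q) = brF (actF act a p) q + brF p (actF act a q)"
    by (rule actF_brF[OF FT_fs[OF KK_br(4)] fq])
  have "KK K2 II i (brF (actF act a p) q)" by (rule KK.KK_br[OF KK_br(1,2,3) actF_FT[OF KK_br(4)] KK_br(5)])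
  moreover have "KK K2 II i (brF p (actF act a q))" by (rule KK.KK_br[OF KK_br(1,2,3,4) KK_br(6)])
  ultimately show ?case unfolding eq by (rule KK.KK_add[OF KK_br(1)])
next
  case (KK_add i f h)
  have eq: "actF act a (f + h) = actF act a f + actF act a h"
    by (rule actF_add[OF FT_fs[OF KK_FT[OF KK_add(2)]] FT_fs[OF KK_FT[OF KK_add(4)]]])
  show ?case unfolding eq by (rule KK.KK_add[OF KK_add(1,3,5)])
next
  case (KK_smul i f c) then show ?case by (simp add: actF_smul KK.KK_smul)
qed

lemma N_act: "n \<in> NN \<Longrightarrow> actF act a n \<in> NN"
proof (induct rule: N_induct[where P="\<lambda>n. actF act a n \<in> NN"])
  case (base i f)
  show ?case
  proof (cases "2 \<le> i")
    case True
    then have "KK K2 II i f" using base unfolding Ndeg_def by simp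
    then have "actF act a f \<in> Ndeg sv act circ i" using KK_act True unfolding Ndeg_def by simp
    then show ?thesis by (rule N_Ndeg)
  next
    case False
    then have "f \<in> II" "f \<in> FT i" using base unfolding Ndeg_def by auto
    then show ?thesis using Iid_FT_N[OF actF_II actF_FT] by simp
  qed
next
  case (add f g)
  have eq: "actF act a (f + g) = actF act a f + actF act a g"
    by (rule actF_add[OF N_fs[OF add(1)] N_fs[OF add(2)]])
  show ?case unfolding eq by (rule N_add[OF add(3,4)])
next
  case (smul c f) then show ?case by (simp add: actF_smul N_smul)
qed simp

end

lemma lx_plusT: "lx (\<lambda>t. X t + Y t) f = lx X f + lx Y f"
  by (simp add: lx_def smul_add sum.distrib)
lemma lx_diffT: "lx (\<lambda>t. X t - Y t) f = lx X f - lx Y f"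
  by (simp add: lx_def smul_diff sum_subtractf)
lemma lx_smulT: "lx (\<lambda>t. smul c (X t)) f = smul c (lx X f)"
  by (simp add: lx_def smul_sum mult.commute)

context LL begin

interpretation V: Vector_Spaces.vector_space sv by (rule VSv)

lemma lx_N: assumes "fs f" "\<And>t. T t \<in> NN" shows "lx T f \<in> NN"
  using assms(1)
proof (induct rule: fs_induct[where P="\<lambda>f. lx T f \<in> NN"])
  case (step c s h)
  have "lx T (smul c (dl s) + h) = smul c (T s) + lx T h" using step by (simp add: lx_add lx_smul)
  then show ?case using step assms(2) by (simp add: N_add N_smul)
qed simp

lemma lx_N_diff: assumes "fs f" "\<And>t. A t - B t \<in> NN" shows "lx A f - lx B f \<in> NN"
  using lx_N[OF assms(1), of "\<lambda>t. A t - B t"] assms(2) by (simp add: lx_diffT)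

lemma cls_mem: "f \<in> cls NN f" by (simp add: cls_def)

lemma cls_eq_iff: "cls NN f = cls NN g \<longleftrightarrow> f - g \<in> NN"
proof
  assume "cls NN f = cls NN g"
  then have "f \<in> cls NN g" using cls_mem by metis
  then show "f - g \<in> NN" by (simp add: cls_def)
next
  assume a: "f - g \<in> NN"
  show "cls NN f = cls NN g"
  proof (rule set_eqI)
    fix h
    have "h - g = (h - f) + (f - g)" "h - f = (h - g) - (f - g)" by simp_all
    then show "h \<in> cls NN f \<longleftrightarrow> h \<in> cls NN g" unfolding cls_def using a N_add N_diff by (metis mem_Collect_eq)
  qed
qed

lemma cls_eqI: "f - g \<in> NN \<Longrightarrow> cls NN f = cls NN g" using cls_eq_iff by blast

lemma rep_cls: "rep (cls NN f) - f \<in> NN"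
proof -
  have "rep (cls NN f) \<in> cls NN f" unfolding rep_def by (rule someI[of "\<lambda>h. h \<in> cls NN f" f, OF cls_mem])
  then show ?thesis by (simp add: cls_def)
qed

lemma cls_0: "cls NN 0 = NN" by (simp add: cls_def)

lemma addT_cls: "addT NN (cls NN f) (cls NN g) = cls NN (f + g)"
proof -
  have "(rep (cls NN f) + rep (cls NN g)) - (f + g) = (rep (cls NN f) - f) + (rep (cls NN g) - g)" by simp
  then show ?thesis unfolding addT_def using rep_cls N_add cls_eqI by metis
qed

lemma smulT_cls: "smulT NN c (cls NN f) = cls NN (smul c f)"
proof -
  have "smul c (rep (cls NN f)) - smul c f = smul c (rep (cls NN f) - f)" by (simp add: smul_diff)
  then show ?thesis unfolding smulT_def using rep_cls N_smul cls_eqI by metis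
qed

lemma brT_cls: assumes "fs f" "fs g" shows "brT NN (cls NN f) (cls NN g) = cls NN (brF f g)"
proof -
  define r1 where "r1 = rep (cls NN f)"
  define r2 where "r2 = rep (cls NN g)"
  have n1: "r1 - f \<in> NN" unfolding r1_def by (rule rep_cls)
  have n2: "r2 - g \<in> NN" unfolding r2_def by (rule rep_cls)
  have fr2: "fs r2" using fs_add[OF assms(2) N_fs[OF n2]] by simp
  have "brF r1 r2 - brF f g = brF (r1 - f) r2 + brF f (r2 - g)" by simp
  moreover have "brF (r1 - f) r2 \<in> NN" by (rule N_brr[OF fr2 n1])
  moreover have "brF f (r2 - g) \<in> NN" by (rule N_brl[OF assms(1) n2])
  ultimately have "brF r1 r2 - brF f g \<in> NN" using N_add by metis
  then show ?thesis unfolding brT_def r1_def[symmetric] r2_def[symmetric] by (rule cls_eqI)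
qed

lemma actT_cls: assumes "fs f" shows "actT act NN a (cls NN f) = cls NN (actF act a f)"
proof -
  define r where "r = rep (cls NN f)"
  have n: "r - f \<in> NN" unfolding r_def by (rule rep_cls)
  have fr: "fs r" using fs_add[OF assms N_fs[OF n]] by simp
  have "actF act a r - actF act a f = actF act a (r - f)" by (simp add: actF_diff[OF fr assms])
  then have "actF act a r - actF act a f \<in> NN" using N_act[OF n] by simp
  then show ?thesis unfolding actT_def r_def[symmetric] by (rule cls_eqI)
qed

lemma leaf_lin: "dl (Leaf (sv c x + y)) - smul c (dl (Leaf x)) - dl (Leaf y) \<in> NN"
proof -
  have "dl (Leaf (sv c x + y)) - smul c (dl (Leaf x)) - dl (Leaf y) \<in> relgens sv"
    unfolding relgens_def by blast
  then have "dl (Leaf (sv c x + y)) - smul c (dl (Leaf x)) - dl (Leaf y) \<in> II" by (rule Iid_gen)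
  moreover have "dl (Leaf (sv c x + y)) - smul c (dl (Leaf x)) - dl (Leaf y) \<in> FT 1"
    by (intro FT_diff FT_smul FT_dl) simp_all
  ultimately show ?thesis by (rule Iid_FT_N)
qed

lemma leaf_add: "dl (Leaf (x + y)) - (dl (Leaf x) + dl (Leaf y)) \<in> NN"
  using leaf_lin[of 1 x y] by (simp add: diff_diff_eq)

lemma leaf_0: "dl (Leaf 0) \<in> NN"
  using N_uminus[OF leaf_add[of 0 0]] by simp

lemma leaf_smul: "dl (Leaf (sv c x)) - smul c (dl (Leaf x)) \<in> NN"
proof -
  have "(dl (Leaf (sv c x)) :: ('v,'k) fv) - smul c (dl (Leaf x)) = (dl (Leaf (sv c x + 0)) - smul c (dl (Leaf x)) - dl (Leaf 0)) + dl (Leaf 0)"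
    by simp
  then show ?thesis using N_add[OF leaf_lin leaf_0] by metis
qed

lemma leaf_diff: "dl (Leaf (x - y)) - (dl (Leaf x) - dl (Leaf y)) \<in> NN"
proof -
  have "(dl (Leaf (x - y)) :: ('v,'k) fv) - (dl (Leaf x) - dl (Leaf y)) = - (dl (Leaf ((x - y) + y)) - (dl (Leaf (x - y)) + dl (Leaf y)))"
    by simp
  then show ?thesis using N_uminus[OF leaf_add] by metis
qed

lemma M_add: "(actTree act (b + c) t :: ('v,'k) fv) - (actTree act b t + actTree act c t) \<in> NN"
proof (induct t rule: ltree.induct[where P="\<lambda>t. (actTree act (b + c) t :: ('v,'k) fv) - (actTree act b t + actTree act c t) \<in> NN"])
  case (Leaf x) then show ?case using leaf_add by (simp add: act_addg)
next
  case (Node s r)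
  have "(actTree act (b + c) (Node s r) :: ('v,'k) fv) - (actTree act b (Node s r) + actTree act c (Node s r))
    = brF (actTree act (b + c) s - (actTree act b s + actTree act c s)) (dl r)
      + brF (dl s) (actTree act (b + c) r - (actTree act b r + actTree act c r))"
    by (simp add: algebra_simps)
  then show ?case using N_add[OF N_brr_dl[OF Node(1)] N_brl_dl[OF Node(2)]] by metis
qed

lemma M_smul: "(actTree act (sg c b) t :: ('v,'k) fv) - smul c (actTree act b t) \<in> NN"
proof (induct t rule: ltree.induct[where P="\<lambda>t. (actTree act (sg c b) t :: ('v,'k) fv) - smul c (actTree act b t) \<in> NN"])
  case (Leaf x) then show ?case using leaf_smul by (simp add: act_smulg)
next
  case (Node s r)
  have "(actTree act (sg c b) (Node s r) :: ('v,'k) fv) - smul c (actTree act b (Node s r))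
    = brF (actTree act (sg c b) s - smul c (actTree act b s)) (dl r)
      + brF (dl s) (actTree act (sg c b) r - smul c (actTree act b r))"
    by (simp add: algebra_simps smul_add)
  then show ?case using N_add[OF N_brr_dl[OF Node(1)] N_brl_dl[OF Node(2)]] by metis
qed

lemma M_diff: "(actTree act (b - c) t :: ('v,'k) fv) - (actTree act b t - actTree act c t) \<in> NN"
proof -
  have "(actTree act (b - c) t :: ('v,'k) fv) - (actTree act b t - actTree act c t)
     = - (actTree act ((b - c) + c) t - (actTree act (b - c) t + actTree act c t))"
    by simp
  then show ?thesis using N_uminus[OF M_add] by metis
qed

lemma M_br: "(actTree act (br a b) t :: ('v,'k) fv) - (actF act a (actTree act b t) - actF act b (actTree act a t)) \<in> NN"
proof (induct t rule: ltree.induct[where P="\<lambda>t. (actTree act (br a b) t :: ('v,'k) fv) - (actF act a (actTree act b t) - actF act b (actTree act a t)) \<in> NN"])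
  case (Leaf x) then show ?case using leaf_diff by (simp add: act_br)
next
  case (Node s r)
  have "(actTree act (br a b) (Node s r) :: ('v,'k) fv) - (actF act a (actTree act b (Node s r)) - actF act b (actTree act a (Node s r)))
    = brF (actTree act (br a b) s - (actF act a (actTree act b s) - actF act b (actTree act a s))) (dl r)
      + brF (dl s) (actTree act (br a b) r - (actF act a (actTree act b r) - actF act b (actTree act a r)))"
    by (simp add: actF_add actF_brF algebra_simps)
  then show ?case using N_add[OF N_brr_dl[OF Node(1)] N_brl_dl[OF Node(2)]] by metis
qed

lemma M_homVact: "(actTree act (homVact br act a Xi u) T :: ('v,'k) fv)
   - (actF act a (actTree act (Xi u) T) - actF act (Xi u) (actTree act a T) - actTree act (Xi (act a u)) T) \<in> NN"
proof -
  have "(actTree act (homVact br act a Xi u) T :: ('v,'k) fv)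
   - (actF act a (actTree act (Xi u) T) - actF act (Xi u) (actTree act a T) - actTree act (Xi (act a u)) T)
   = (actTree act (br a (Xi u) - Xi (act a u)) T - (actTree act (br a (Xi u)) T - actTree act (Xi (act a u)) T))
     + (actTree act (br a (Xi u)) T - (actF act a (actTree act (Xi u) T) - actF act (Xi u) (actTree act a T)))"
    by (simp add: homVact_def)
  then show ?thesis using N_add[OF M_diff M_br] by metis
qed

end

fun DT :: "('g \<Rightarrow> 'v \<Rightarrow> 'v) \<Rightarrow> ('v \<Rightarrow> 'g) \<Rightarrow> 'v ltree \<Rightarrow> ('v,'k::field) fv" where
  "DT act Xi (Leaf x) = 0"
| "DT act Xi (Node (Leaf u) (Leaf v)) = dl (Leaf (act (Xi u) v)) + dl (Leaf (act (Xi v) u))"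
| "DT act Xi (Node (Leaf u) (Node s t)) = actTree act (Xi u) (Node s t) - brF (dl (Leaf u)) (DT act Xi (Node s t))"
| "DT act Xi (Node (Node s t) (Leaf v)) = smul (- sgnk (nlv (Node s t))) (actTree act (Xi v) (Node s t) - brF (dl (Leaf v)) (DT act Xi (Node s t)))"
| "DT act Xi (Node (Node a b) (Node c d)) = brF (DT act Xi (Node a b)) (dl (Node c d)) + smul (sgnk (nlv (Node a b))) (brF (dl (Node a b)) (DT act Xi (Node c d)))"

definition DX :: "('g \<Rightarrow> 'v \<Rightarrow> 'v) \<Rightarrow> ('v \<Rightarrow> 'g) \<Rightarrow> ('v,'k::field) fv \<Rightarrow> ('v,'k) fv" where
  "DX act Xi f = lx (DT act Xi) f"

lemma nlv2: "2 \<le> nlv t \<Longrightarrow> \<exists>a b. t = Node a b" by (cases t) auto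
lemma nlv_Node2: "2 \<le> nlv (Node a b)" using nlv_pos[of a] nlv_pos[of b] by simp

lemma DT_L: "2 \<le> nlv T \<Longrightarrow> DT act Xi (Node (Leaf u) T) = actTree act (Xi u) T - brF (dl (Leaf u)) (DT act Xi T)"
  by (cases T) auto
lemma DT_R: "2 \<le> nlv T \<Longrightarrow> DT act Xi (Node T (Leaf v)) = smul (- sgnk (nlv T)) (DT act Xi (Node (Leaf v) T))"
  by (cases T) auto
lemma DT_NN: "2 \<le> nlv X \<Longrightarrow> 2 \<le> nlv Y \<Longrightarrow> DT act Xi (Node X Y) = brF (DT act Xi X) (dl Y) + smul (sgnk (nlv X)) (brF (dl X) (DT act Xi Y))"
  by (cases X; cases Y) auto

lemma DT_FT: "(DT act Xi t :: ('v,'k::field) fv) \<in> FT (nlv t - 1)"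
proof (induct t rule: ltree.induct[where P="\<lambda>t. (DT act Xi t :: ('v,'k::field) fv) \<in> FT (nlv t - 1)"])
  case (Leaf x) then show ?case by simp
next
  case (Node s r)
  show ?case
  proof (cases s)
    case (Leaf u)
    show ?thesis
    proof (cases r)
      case (Leaf v) then show ?thesis using \<open>s = Leaf u\<close> by (simp add: FT_add FT_dl)
    next
      case (Node r1 r2)
      then have n: "2 \<le> nlv r" using nlv_Node2 by simp
      have "brF (dl (Leaf u)) (DT act Xi r :: ('v,'k) fv) \<in> FT (1 + (nlv r - 1))"
        by (rule brF_FT[OF FT_dl Node.hyps(2)]) simp
      then have "brF (dl (Leaf u)) (DT act Xi r :: ('v,'k) fv) \<in> FT (nlv r)" using n by simp
      moreover have "(DT act Xi (Node (Leaf u) r) :: ('v,'k) fv) = actTree act (Xi u) r - brF (dl (Leaf u)) (DT act Xi r)" by (rule DT_L[OF n])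
      moreover have "(actTree act (Xi u) r :: ('v,'k) fv) \<in> FT (nlv r)" by (rule actTree_FT)
      ultimately show ?thesis using \<open>s = Leaf u\<close> by (simp add: FT_diff)
    qed
  next
    case (Node s1 s2)
    then have ns: "2 \<le> nlv s" using nlv_Node2 by simp
    show ?thesis
    proof (cases r)
      case (Leaf v)
      have "brF (dl (Leaf v)) (DT act Xi s :: ('v,'k) fv) \<in> FT (1 + (nlv s - 1))"
        by (rule brF_FT[OF FT_dl Node.hyps(1)]) simp
      then have "brF (dl (Leaf v)) (DT act Xi s :: ('v,'k) fv) \<in> FT (nlv s)" using ns by simp
      moreover have "(DT act Xi (Node (Leaf v) s) :: ('v,'k) fv) = actTree act (Xi v) s - brF (dl (Leaf v)) (DT act Xi s)" by (rule DT_L[OF ns])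
      moreover have "(DT act Xi (Node s (Leaf v)) :: ('v,'k) fv) = smul (- sgnk (nlv s)) (DT act Xi (Node (Leaf v) s))" by (rule DT_R[OF ns])
      moreover have "(actTree act (Xi v) s :: ('v,'k) fv) \<in> FT (nlv s)" by (rule actTree_FT)
      ultimately show ?thesis using Leaf by (simp add: FT_diff FT_smul)
    next
      case (Node r1 r2)
      then have nr: "2 \<le> nlv r" using nlv_Node2 by simp
      have "brF (DT act Xi s :: ('v,'k) fv) (dl r) \<in> FT ((nlv s - 1) + nlv r)"
        by (rule brF_FT[OF Node.hyps(1) FT_dl]) simp
      moreover have "brF (dl s) (DT act Xi r :: ('v,'k) fv) \<in> FT (nlv s + (nlv r - 1))"
        by (rule brF_FT[OF FT_dl Node.hyps(2)]) simp
      moreover have "(DT act Xi (Node s r) :: ('v,'k) fv) = brF (DT act Xi s) (dl r) + smul (sgnk (nlv s)) (brF (dl s) (DT act Xi r))" by (rule DT_NN[OF ns nr])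
      ultimately show ?thesis using ns nr by (simp add: FT_add FT_smul)
    qed
  qed
qed

lemma fs_DT[simp]: "fs (DT act Xi t :: ('v,'k::field) fv)" by (rule FT_fs[OF DT_FT])

lemma fs_DX[simp]: "fs (DX act Xi f)" by (simp add: DX_def)
lemma DX_dl[simp]: "DX act Xi (dl t) = DT act Xi t" by (simp add: DX_def)
lemma DX_0[simp]: "DX act Xi 0 = 0" by (simp add: DX_def)
lemma DX_add: "fs f \<Longrightarrow> fs g \<Longrightarrow> DX act Xi (f + g) = DX act Xi f + DX act Xi g" by (simp add: DX_def lx_add)
lemma DX_diff: "fs f \<Longrightarrow> fs g \<Longrightarrow> DX act Xi (f - g) = DX act Xi f - DX act Xi g" by (simp add: DX_def lx_diff)
lemma DX_smul: "DX act Xi (smul c f) = smul c (DX act Xi f)" by (simp add: DX_def lx_smul)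

lemma DX_FT: assumes "f \<in> FT n" shows "DX act Xi f \<in> FT (n - 1)"
  using assms
proof (induct rule: FT_induct[where P="\<lambda>f. DX act Xi f \<in> FT (n - 1)"])
  case (base t) then show ?case using DT_FT[of act Xi t] by simp
next
  case (add f g) then show ?case by (simp add: DX_add FT_fs FT_add)
next
  case (smul c f) then show ?case by (simp add: DX_smul FT_smul)
qed simp

lemma DX_brL: assumes "f \<in> FT n" "2 \<le> n"
  shows "DX act Xi (brF (dl (Leaf v)) f) = actF act (Xi v) f - brF (dl (Leaf v)) (DX act Xi f)"
  using assms(1)
proof (induct rule: FT_induct[where P="\<lambda>f. DX act Xi (brF (dl (Leaf v)) f) = actF act (Xi v) f - brF (dl (Leaf v)) (DX act Xi f)"])
  case (base t) then show ?case using DT_L[of t act Xi v] assms(2) by simp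
next
  case (add f g)
  have ff: "fs f" "fs g" using add(1,2) FT_fs by auto
  then show ?case using add(3,4) by (simp add: DX_add actF_add)
next
  case (smul c f) then show ?case by (simp add: DX_smul actF_smul smul_diff)
qed simp

lemma DX_brR: assumes "f \<in> FT n" "2 \<le> n"
  shows "DX act Xi (brF f (dl (Leaf v))) = smul (- sgnk n) (DX act Xi (brF (dl (Leaf v)) f))"
  using assms(1)
proof (induct rule: FT_induct[where P="\<lambda>f. DX act Xi (brF f (dl (Leaf v))) = smul (- sgnk n) (DX act Xi (brF (dl (Leaf v)) f))"])
  case (base t) then show ?case using DT_R[of t act Xi v] assms(2) by simp
next
  case (add f g)
  have ff: "fs f" "fs g" using add(1,2) FT_fs by auto
  then show ?case using add(3,4) by (simp add: DX_add smul_add)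
next
  case (smul c f) then show ?case by (simp add: DX_smul mult.commute)
qed simp

lemma DX_brNN: assumes "f \<in> FT p" "g \<in> FT q" "2 \<le> p" "2 \<le> q"
  shows "DX act Xi (brF f g) = brF (DX act Xi f) g + smul (sgnk p) (brF f (DX act Xi g))"
proof -
  have L: "DX act Xi (brF (dl s) g) = brF (DT act Xi s) g + smul (sgnk p) (brF (dl s) (DX act Xi g))" if "nlv s = p" for s
    using assms(2)
  proof (induct rule: FT_induct[where P="\<lambda>g. DX act Xi (brF (dl s) g) = brF (DT act Xi s) g + smul (sgnk p) (brF (dl s) (DX act Xi g))"])
    case (base t) then show ?case using DT_NN[of s t act Xi] that assms(3,4) by simp
  next
    case (add f g)
    have ff: "fs f" "fs g" using add(1,2) FT_fs by auto
    then show ?case using add(3,4) by (simp add: DX_add smul_add)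
  next
    case (smul c f) then show ?case by (simp add: DX_smul smul_add mult.commute)
  qed simp
  show ?thesis
    using assms(1)
  proof (induct rule: FT_induct[where P="\<lambda>f. DX act Xi (brF f g) = brF (DX act Xi f) g + smul (sgnk p) (brF f (DX act Xi g))"])
    case (base t) then show ?case using L by simp
  next
    case (add f1 f2)
    have ff: "fs f1" "fs f2" "fs g" using add(1,2) assms(2) FT_fs by auto
    then show ?case using add(3,4) by (simp add: DX_add smul_add)
  next
    case (smul c f) then show ?case using FT_fs[OF assms(2)] by (simp add: DX_smul smul_add mult.commute)
  qed simp
qed


context LL begin

abbreviation EQ :: "'g \<Rightarrow> ('v \<Rightarrow> 'g) \<Rightarrow> 'v ltree \<Rightarrow> bool" where
  "EQ a Xi t \<equiv> (DT act (homVact br act a Xi) t :: ('v,'k) fv) - (actF act a (DT act Xi t) - DX act Xi (actTree act a t)) \<in> NN"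

lemma leaf_diff3: "(dl (Leaf (x - y - z)) :: ('v,'k) fv) - (dl (Leaf x) - dl (Leaf y) - dl (Leaf z)) \<in> NN"
proof -
  have "(dl (Leaf (x - y - z)) :: ('v,'k) fv) - (dl (Leaf x) - dl (Leaf y) - dl (Leaf z))
    = (dl (Leaf ((x - y) - z)) - (dl (Leaf (x - y)) - dl (Leaf z))) + (dl (Leaf (x - y)) - (dl (Leaf x) - dl (Leaf y)))"
    by (simp add: algebra_simps)
  then show ?thesis using N_add[OF leaf_diff leaf_diff] by metis
qed

lemma act_homVact: "act (homVact br act a Xi u) v = act a (act (Xi u) v) - act (Xi u) (act a v) - act (Xi (act a u)) v"
  by (simp add: homVact_def act_diffg act_br)

lemma EQ_LL: "EQ a Xi (Node (Leaf u) (Leaf v))"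
proof -
  have "(DT act (homVact br act a Xi) (Node (Leaf u) (Leaf v)) :: ('v,'k) fv)
      - (actF act a (DT act Xi (Node (Leaf u) (Leaf v))) - DX act Xi (actTree act a (Node (Leaf u) (Leaf v))))
    = (dl (Leaf (act a (act (Xi u) v) - act (Xi u) (act a v) - act (Xi (act a u)) v))
        - (dl (Leaf (act a (act (Xi u) v))) - dl (Leaf (act (Xi u) (act a v))) - dl (Leaf (act (Xi (act a u)) v))))
     + (dl (Leaf (act a (act (Xi v) u) - act (Xi v) (act a u) - act (Xi (act a v)) u))
        - (dl (Leaf (act a (act (Xi v) u))) - dl (Leaf (act (Xi v) (act a u))) - dl (Leaf (act (Xi (act a v)) u))))"
    by (simp add: act_homVact actF_add DX_add algebra_simps)
  then show ?thesis using N_add[OF leaf_diff3 leaf_diff3] by metis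
qed

lemma EQ_L:
  assumes n: "2 \<le> nlv T" and IH: "EQ a Xi T"
  shows "EQ a Xi (Node (Leaf u) T)"
proof -
  let ?Xa = "homVact br act a Xi"
  have aT: "(actTree act a T :: ('v,'k) fv) \<in> FT (nlv T)" by (rule actTree_FT)
  have e1: "(DT act ?Xa (Node (Leaf u) T) :: ('v,'k) fv) = actTree act (?Xa u) T - brF (dl (Leaf u)) (DT act ?Xa T)"
    by (rule DT_L[OF n])
  have e2: "(DT act Xi (Node (Leaf u) T) :: ('v,'k) fv) = actTree act (Xi u) T - brF (dl (Leaf u)) (DT act Xi T)"
    by (rule DT_L[OF n])
  have e3: "(DT act Xi (Node (Leaf (act a u)) T) :: ('v,'k) fv) = actTree act (Xi (act a u)) T - brF (dl (Leaf (act a u))) (DT act Xi T)"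
    by (rule DT_L[OF n])
  have e4: "DX act Xi (brF (dl (Leaf u)) (actTree act a T) :: ('v,'k) fv) = actF act (Xi u) (actTree act a T) - brF (dl (Leaf u)) (DX act Xi (actTree act a T))"
    by (rule DX_brL[OF aT n])
  have e5: "actF act a (DT act Xi (Node (Leaf u) T) :: ('v,'k) fv)
      = actF act a (actTree act (Xi u) T) - (brF (dl (Leaf (act a u))) (DT act Xi T) + brF (dl (Leaf u)) (actF act a (DT act Xi T)))"
    unfolding e2 by (simp add: actF_diff actF_brF)
  have e6: "DX act Xi (actTree act a (Node (Leaf u) T) :: ('v,'k) fv)
      = DT act Xi (Node (Leaf (act a u)) T) + DX act Xi (brF (dl (Leaf u)) (actTree act a T))"
    by (simp add: DX_add)
  have "(DT act ?Xa (Node (Leaf u) T) :: ('v,'k) fv) - (actF act a (DT act Xi (Node (Leaf u) T)) - DX act Xi (actTree act a (Node (Leaf u) T)))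
    = (actTree act (?Xa u) T - (actF act a (actTree act (Xi u) T) - actF act (Xi u) (actTree act a T) - actTree act (Xi (act a u)) T))
      - brF (dl (Leaf u)) (DT act ?Xa T - (actF act a (DT act Xi T) - DX act Xi (actTree act a T)))"
    unfolding e1 e5 e6 e3 e4 by (simp add: algebra_simps)
  moreover have "brF (dl (Leaf u)) (DT act ?Xa T - (actF act a (DT act Xi T) - DX act Xi (actTree act a T))) \<in> NN"
    by (rule N_brl_dl[OF IH])
  ultimately show ?thesis using N_diff[OF M_homVact] by metis
qed

lemma EQ_R:
  assumes n: "2 \<le> nlv T" and L: "EQ a Xi (Node (Leaf v) T)"
  shows "EQ a Xi (Node T (Leaf v))"
proof -
  let ?Xa = "homVact br act a Xi"
  let ?s = "- sgnk (nlv T) :: 'k"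
  have aT: "(actTree act a T :: ('v,'k) fv) \<in> FT (nlv T)" by (rule actTree_FT)
  have e1: "(DT act ?Xa (Node T (Leaf v)) :: ('v,'k) fv) = smul ?s (DT act ?Xa (Node (Leaf v) T))"
    by (rule DT_R[OF n])
  have e2: "(DT act Xi (Node T (Leaf v)) :: ('v,'k) fv) = smul ?s (DT act Xi (Node (Leaf v) T))"
    by (rule DT_R[OF n])
  have e3: "(DT act Xi (Node T (Leaf (act a v))) :: ('v,'k) fv) = smul ?s (DT act Xi (Node (Leaf (act a v)) T))"
    by (rule DT_R[OF n])
  have e4: "DX act Xi (brF (actTree act a T) (dl (Leaf v)) :: ('v,'k) fv) = smul ?s (DX act Xi (brF (dl (Leaf v)) (actTree act a T)))"
    by (rule DX_brR[OF aT n])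
  have e6: "DX act Xi (actTree act a (Node T (Leaf v)) :: ('v,'k) fv)
      = DX act Xi (brF (actTree act a T) (dl (Leaf v))) + DT act Xi (Node T (Leaf (act a v)))"
    by (simp add: DX_add)
  have e7: "DX act Xi (actTree act a (Node (Leaf v) T) :: ('v,'k) fv)
      = DT act Xi (Node (Leaf (act a v)) T) + DX act Xi (brF (dl (Leaf v)) (actTree act a T))"
    by (simp add: DX_add)
  have "(DT act ?Xa (Node T (Leaf v)) :: ('v,'k) fv) - (actF act a (DT act Xi (Node T (Leaf v))) - DX act Xi (actTree act a (Node T (Leaf v))))
    = smul ?s ((DT act ?Xa (Node (Leaf v) T) :: ('v,'k) fv) - (actF act a (DT act Xi (Node (Leaf v) T)) - DX act Xi (actTree act a (Node (Leaf v) T))))"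
    unfolding e1 e2 e6 e3 e4 e7 by (simp add: actF_smul smul_diff smul_add algebra_simps)
  then show ?thesis using N_smul[OF L] by metis
qed

lemma EQ_NN:
  assumes nX: "2 \<le> nlv X" and nY: "2 \<le> nlv Y" and IX: "EQ a Xi X" and IY: "EQ a Xi Y"
  shows "EQ a Xi (Node X Y)"
proof -
  let ?Xa = "homVact br act a Xi"
  let ?s = "sgnk (nlv X) :: 'k"
  have aX: "(actTree act a X :: ('v,'k) fv) \<in> FT (nlv X)" by (rule actTree_FT)
  have aY: "(actTree act a Y :: ('v,'k) fv) \<in> FT (nlv Y)" by (rule actTree_FT)
  have e1: "(DT act ?Xa (Node X Y) :: ('v,'k) fv) = brF (DT act ?Xa X) (dl Y) + smul ?s (brF (dl X) (DT act ?Xa Y))"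
    by (rule DT_NN[OF nX nY])
  have e2: "(DT act Xi (Node X Y) :: ('v,'k) fv) = brF (DT act Xi X) (dl Y) + smul ?s (brF (dl X) (DT act Xi Y))"
    by (rule DT_NN[OF nX nY])
  have e3: "DX act Xi (brF (actTree act a X) (dl Y) :: ('v,'k) fv) = brF (DX act Xi (actTree act a X)) (dl Y) + smul ?s (brF (actTree act a X) (DT act Xi Y))"
    using DX_brNN[OF aX FT_dl[of Y "nlv Y"] nX nY] by simp
  have e4: "DX act Xi (brF (dl X) (actTree act a Y) :: ('v,'k) fv) = brF (DT act Xi X) (actTree act a Y) + smul ?s (brF (dl X) (DX act Xi (actTree act a Y)))"
    using DX_brNN[OF FT_dl[of X "nlv X"] aY nX nY] by simp
  have e6: "DX act Xi (actTree act a (Node X Y) :: ('v,'k) fv)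
      = DX act Xi (brF (actTree act a X) (dl Y)) + DX act Xi (brF (dl X) (actTree act a Y))"
    by (simp add: DX_add)
  have "(DT act ?Xa (Node X Y) :: ('v,'k) fv) - (actF act a (DT act Xi (Node X Y)) - DX act Xi (actTree act a (Node X Y)))
    = brF (DT act ?Xa X - (actF act a (DT act Xi X) - DX act Xi (actTree act a X))) (dl Y)
      + smul ?s (brF (dl X) (DT act ?Xa Y - (actF act a (DT act Xi Y) - DX act Xi (actTree act a Y))))"
    unfolding e1 e2 e6 e3 e4 by (simp add: actF_add actF_smul actF_brF smul_diff smul_add algebra_simps)
  then show ?thesis using N_add[OF N_brr_dl[OF IX] N_smul[OF N_brl_dl[OF IY]]] by metis
qed

lemma EQ_all: "EQ a Xi t"
proof (induct t rule: ltree.induct[where P="\<lambda>t. EQ a Xi t"])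
  case (Leaf x) then show ?case by simp
next
  case (Node s r)
  show ?case
  proof (cases s)
    case (Leaf u)
    show ?thesis
    proof (cases r)
      case (Leaf v) show ?thesis unfolding Leaf \<open>s = Leaf u\<close> by (rule EQ_LL)
    next
      case (Node r1 r2)
      then have n: "2 \<le> nlv r" using nlv_Node2 by simp
      show ?thesis unfolding \<open>s = Leaf u\<close> by (rule EQ_L[OF n Node.hyps(2)])
    qed
  next
    case (Node s1 s2)
    then have ns: "2 \<le> nlv s" using nlv_Node2 by simp
    show ?thesis
    proof (cases r)
      case (Leaf v) show ?thesis unfolding Leaf by (rule EQ_R[OF ns EQ_L[OF ns Node.hyps(1)]])
    next
      case (Node r1 r2)
      then have nr: "2 \<le> nlv r" using nlv_Node2 by simp
      show ?thesis by (rule EQ_NN[OF ns nr Node.hyps(1,2)])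
    qed
  qed
qed

end

context LL begin

abbreviation EA :: "('v \<Rightarrow> 'g) \<Rightarrow> ('v \<Rightarrow> 'g) \<Rightarrow> 'v ltree \<Rightarrow> bool" where
  "EA Xi Psi t \<equiv> (DT act (homVadd Xi Psi) t :: ('v,'k) fv) - (DT act Xi t + DT act Psi t) \<in> NN"

abbreviation ES :: "'k \<Rightarrow> ('v \<Rightarrow> 'g) \<Rightarrow> 'v ltree \<Rightarrow> bool" where
  "ES c Xi t \<equiv> (DT act (homVsmul sg c Xi) t :: ('v,'k) fv) - smul c (DT act Xi t) \<in> NN"

lemma EA_all: "EA Xi Psi t"
proof (induct t rule: ltree.induct[where P="\<lambda>t. EA Xi Psi t"])
  case (Leaf x) then show ?case by simp
next
  case (Node s r)
  let ?Z = "homVadd Xi Psi"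
  have Lc: "EA Xi Psi (Node (Leaf u) T)" if n: "2 \<le> nlv T" and IH: "EA Xi Psi T" for u T
  proof -
    have "(DT act ?Z (Node (Leaf u) T) :: ('v,'k) fv) - (DT act Xi (Node (Leaf u) T) + DT act Psi (Node (Leaf u) T))
      = (actTree act (Xi u + Psi u) T - (actTree act (Xi u) T + actTree act (Psi u) T))
        - brF (dl (Leaf u)) (DT act ?Z T - (DT act Xi T + DT act Psi T))"
      unfolding DT_L[OF n] by (simp add: homVadd_def algebra_simps)
    then show ?thesis using N_diff[OF M_add N_brl_dl[OF IH]] by metis
  qed
  show ?case
  proof (cases s)
    case (Leaf u)
    show ?thesis
    proof (cases r)
      case (Leaf v)
      have "(DT act ?Z (Node (Leaf u) (Leaf v)) :: ('v,'k) fv) - (DT act Xi (Node (Leaf u) (Leaf v)) + DT act Psi (Node (Leaf u) (Leaf v)))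
        = (dl (Leaf (act (Xi u) v + act (Psi u) v)) - (dl (Leaf (act (Xi u) v)) + dl (Leaf (act (Psi u) v))))
        + (dl (Leaf (act (Xi v) u + act (Psi v) u)) - (dl (Leaf (act (Xi v) u)) + dl (Leaf (act (Psi v) u))))"
        by (simp add: homVadd_def act_addg algebra_simps)
      then show ?thesis unfolding Leaf \<open>s = Leaf u\<close> using N_add[OF leaf_add leaf_add] by metis
    next
      case (Node r1 r2)
      then have n: "2 \<le> nlv r" using nlv_Node2 by simp
      show ?thesis unfolding \<open>s = Leaf u\<close> by (rule Lc[OF n Node.hyps(2)])
    qed
  next
    case (Node s1 s2)
    then have ns: "2 \<le> nlv s" using nlv_Node2 by simp
    show ?thesis
    proof (cases r)
      case (Leaf v)
      have "(DT act ?Z (Node s (Leaf v)) :: ('v,'k) fv) - (DT act Xi (Node s (Leaf v)) + DT act Psi (Node s (Leaf v)))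
        = smul (- sgnk (nlv s)) ((DT act ?Z (Node (Leaf v) s) :: ('v,'k) fv) - (DT act Xi (Node (Leaf v) s) + DT act Psi (Node (Leaf v) s)))"
        unfolding DT_R[OF ns] by (simp add: smul_diff smul_add)
      then show ?thesis unfolding Leaf using N_smul[OF Lc[OF ns Node.hyps(1)]] by metis
    next
      case (Node r1 r2)
      then have nr: "2 \<le> nlv r" using nlv_Node2 by simp
      have "(DT act ?Z (Node s r) :: ('v,'k) fv) - (DT act Xi (Node s r) + DT act Psi (Node s r))
        = brF (DT act ?Z s - (DT act Xi s + DT act Psi s)) (dl r)
          + smul (sgnk (nlv s)) (brF (dl s) (DT act ?Z r - (DT act Xi r + DT act Psi r)))"
        unfolding DT_NN[OF ns nr] by (simp add: smul_diff smul_add algebra_simps)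
      then show ?thesis using N_add[OF N_brr_dl[OF Node.hyps(1)] N_smul[OF N_brl_dl[OF Node.hyps(2)]]] by metis
    qed
  qed
qed

lemma ES_all: "ES c Xi t"
proof (induct t rule: ltree.induct[where P="\<lambda>t. ES c Xi t"])
  case (Leaf x) then show ?case by simp
next
  case (Node s r)
  let ?Z = "homVsmul sg c Xi"
  have Lc: "ES c Xi (Node (Leaf u) T)" if n: "2 \<le> nlv T" and IH: "ES c Xi T" for u T
  proof -
    have "(DT act ?Z (Node (Leaf u) T) :: ('v,'k) fv) - smul c (DT act Xi (Node (Leaf u) T))
      = (actTree act (sg c (Xi u)) T - smul c (actTree act (Xi u) T))
        - brF (dl (Leaf u)) (DT act ?Z T - smul c (DT act Xi T))"
      unfolding DT_L[OF n] by (simp add: homVsmul_def smul_diff algebra_simps)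
    then show ?thesis using N_diff[OF M_smul N_brl_dl[OF IH]] by metis
  qed
  show ?case
  proof (cases s)
    case (Leaf u)
    show ?thesis
    proof (cases r)
      case (Leaf v)
      have "(DT act ?Z (Node (Leaf u) (Leaf v)) :: ('v,'k) fv) - smul c (DT act Xi (Node (Leaf u) (Leaf v)))
        = (dl (Leaf (sv c (act (Xi u) v))) - smul c (dl (Leaf (act (Xi u) v))))
        + (dl (Leaf (sv c (act (Xi v) u))) - smul c (dl (Leaf (act (Xi v) u))))"
        by (simp add: homVsmul_def act_smulg smul_add algebra_simps)
      then show ?thesis unfolding Leaf \<open>s = Leaf u\<close> using N_add[OF leaf_smul leaf_smul] by metis
    next
      case (Node r1 r2)
      then have n: "2 \<le> nlv r" using nlv_Node2 by simp
      show ?thesis unfolding \<open>s = Leaf u\<close> by (rule Lc[OF n Node.hyps(2)])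
    qed
  next
    case (Node s1 s2)
    then have ns: "2 \<le> nlv s" using nlv_Node2 by simp
    show ?thesis
    proof (cases r)
      case (Leaf v)
      have "(DT act ?Z (Node s (Leaf v)) :: ('v,'k) fv) - smul c (DT act Xi (Node s (Leaf v)))
        = smul (- sgnk (nlv s)) ((DT act ?Z (Node (Leaf v) s) :: ('v,'k) fv) - smul c (DT act Xi (Node (Leaf v) s)))"
        unfolding DT_R[OF ns] by (simp add: smul_diff mult.commute)
      then show ?thesis unfolding Leaf using N_smul[OF Lc[OF ns Node.hyps(1)]] by metis
    next
      case (Node r1 r2)
      then have nr: "2 \<le> nlv r" using nlv_Node2 by simp
      have "(DT act ?Z (Node s r) :: ('v,'k) fv) - smul c (DT act Xi (Node s r))
        = brF (DT act ?Z s - smul c (DT act Xi s)) (dl r)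
          + smul (sgnk (nlv s)) (brF (dl s) (DT act ?Z r - smul c (DT act Xi r)))"
        unfolding DT_NN[OF ns nr] by (simp add: smul_diff smul_add mult.commute algebra_simps)
      then show ?thesis using N_add[OF N_brr_dl[OF Node.hyps(1)] N_smul[OF N_brl_dl[OF Node.hyps(2)]]] by metis
    qed
  qed
qed

lemma DX_homVadd: assumes "fs f"
  shows "DX act (homVadd Xi Psi) f - (DX act Xi f + DX act Psi f) \<in> NN"
  using lx_N_diff[OF assms, of "DT act (homVadd Xi Psi)" "\<lambda>t. DT act Xi t + DT act Psi t"] EA_all
  by (simp add: DX_def lx_plusT)

lemma DX_homVsmul: assumes "fs f"
  shows "DX act (homVsmul sg c Xi) f - smul c (DX act Xi f) \<in> NN"
  using lx_N_diff[OF assms, of "DT act (homVsmul sg c Xi)" "\<lambda>t. smul c (DT act Xi t)"] ES_all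
  by (simp add: DX_def lx_smulT)

lemma DX_homVact: assumes "fs f"
  shows "DX act (homVact br act a Xi) f - (actF act a (DX act Xi f) - DX act Xi (actF act a f)) \<in> NN"
proof -
  have c1: "lx (\<lambda>t. actF act a (DT act Xi t)) f = actF act a (lx (DT act Xi) f)"
    by (rule lx_linear_comp[OF actF_add actF_smul actF_0 fs_DT assms])
  have c2: "lx (\<lambda>t. DX act Xi (actTree act a t)) f = DX act Xi (lx (actTree act a) f)"
    by (rule lx_linear_comp[OF DX_add DX_smul DX_0 fs_actTree assms])
  have "lx (DT act (homVact br act a Xi)) f - lx (\<lambda>t. actF act a (DT act Xi t) - DX act Xi (actTree act a t)) f \<in> NN"
    by (rule lx_N_diff[OF assms]) (rule EQ_all)
  then show ?thesis unfolding lx_diffT c1 c2 DX_def[symmetric] actF_lx[symmetric] .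
qed

end

context LL begin

context
  fixes D :: "nat \<Rightarrow> ('v, 'k) fv set \<Rightarrow> ('v, 'k) fv set"
  assumes DP: "is_LL_differential sv act circ Theta D"
begin

interpretation V: Vector_Spaces.vector_space sv by (rule VSv)
interpretation G: Vector_Spaces.vector_space sg by (rule VSg)

lemma H1: "1 \<le> i \<Longrightarrow> linear_T NN i (D i)"
  using DP unfolding is_LL_differential_def Let_def by blast
lemma H3: "D 1 (brT NN (iotaT NN u) (iotaT NN v)) = iotaT NN (sv 2 (symprod sv circ u v))"
  using DP unfolding is_LL_differential_def Let_def by blast
lemma H4: "2 \<le> i \<Longrightarrow> X \<in> Tsp NN i \<Longrightarrow> D i (brT NN (iotaT NN u) X)
            = addT NN (actT act NN (Theta u) X) (smulT NN (-1) (brT NN (iotaT NN u) (D (i - 1) X)))"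
  using DP unfolding is_LL_differential_def Let_def by blast
lemma H5: "2 \<le> i \<Longrightarrow> 2 \<le> j \<Longrightarrow> X \<in> Tsp NN i \<Longrightarrow> Y \<in> Tsp NN j \<Longrightarrow>
          D (i + j - 1) (brT NN X Y)
            = addT NN (brT NN (D (i - 1) X) Y) (smulT NN ((-1) ^ i) (brT NN X (D (j - 1) Y)))"
  using DP unfolding is_LL_differential_def Let_def by blast

lemma Tsp_cls: "f \<in> FT n \<Longrightarrow> cls NN f \<in> Tsp NN n" unfolding Tsp_def by blast

lemma D_add: "1 \<le> i \<Longrightarrow> X \<in> Tsp NN (i + 1) \<Longrightarrow> Y \<in> Tsp NN (i + 1) \<Longrightarrow> D i (addT NN X Y) = addT NN (D i X) (D i Y)"
  using H1 unfolding linear_T_def by blast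
lemma D_smul: "1 \<le> i \<Longrightarrow> X \<in> Tsp NN (i + 1) \<Longrightarrow> D i (smulT NN c X) = smulT NN c (D i X)"
  using H1 unfolding linear_T_def by blast
lemma D_Tsp: "1 \<le> i \<Longrightarrow> X \<in> Tsp NN (i + 1) \<Longrightarrow> D i X \<in> Tsp NN i"
  using H1 unfolding linear_T_def by blast

lemma smulT_0: "Y \<in> Tsp NN n \<Longrightarrow> smulT NN 0 Y = NN"
  unfolding Tsp_def using smulT_cls[of 0] cls_0 by auto

lemma D_N: assumes "1 \<le> i" shows "D i NN = NN"
proof -
  have X: "NN \<in> Tsp NN (i + 1)" using Tsp_cls[OF FT_0] cls_0 by metis
  have "smulT NN 0 NN = NN" using smulT_0[OF X] .
  then have "D i NN = smulT NN 0 (D i NN)" using D_smul[OF assms X, of 0] by simp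
  then show ?thesis using smulT_0[OF D_Tsp[OF assms X]] by simp
qed

lemma AG_L:
  assumes n: "2 \<le> nlv T" and IH: "D (nlv T - 1) (cls NN (dl T)) = cls NN (DT act Theta T)"
  shows "D (nlv T) (cls NN (dl (Node (Leaf u) T))) = cls NN (DT act Theta (Node (Leaf u) T))"
proof -
  have X: "cls NN (dl T) \<in> Tsp NN (nlv T)" by (rule Tsp_cls[OF FT_dl]) simp
  have "brT NN (iotaT NN u) (cls NN (dl T)) = cls NN (dl (Node (Leaf u) T))"
    unfolding iotaT_def by (simp add: brT_cls)
  then have "D (nlv T) (cls NN (dl (Node (Leaf u) T)))
     = addT NN (actT act NN (Theta u) (cls NN (dl T))) (smulT NN (-1) (brT NN (iotaT NN u) (cls NN (DT act Theta T))))"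
    using H4[OF n X, of u] IH by simp
  also have "\<dots> = cls NN (actTree act (Theta u) T - brF (dl (Leaf u)) (DT act Theta T))"
    unfolding iotaT_def by (simp add: brT_cls actT_cls smulT_cls addT_cls)
  also have "\<dots> = cls NN (DT act Theta (Node (Leaf u) T))" by (simp add: DT_L[OF n])
  finally show ?thesis .
qed

lemma AG: "2 \<le> nlv t \<longrightarrow> D (nlv t - 1) (cls NN (dl t)) = cls NN (DT act Theta t)"
proof (induct t rule: ltree.induct[where P="\<lambda>t. 2 \<le> nlv t \<longrightarrow> D (nlv t - 1) (cls NN (dl t)) = cls NN (DT act Theta t)"])
  case (Leaf x) then show ?case by simp
next
  case (Node s r)
  show ?case
  proof (cases s)
    case (Leaf u)
    show ?thesis
    proof (cases r)
      case (Leaf v)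
      have e: "brT NN (iotaT NN u) (iotaT NN v) = cls NN (dl (Node (Leaf u) (Leaf v)))"
        unfolding iotaT_def by (simp add: brT_cls)
      have "D 1 (cls NN (dl (Node (Leaf u) (Leaf v)))) = iotaT NN (sv 2 (symprod sv circ u v))"
        using H3[of u v] unfolding e .
      also have "\<dots> = cls NN (dl (Leaf (circ u v + circ v u)))"
        unfolding iotaT_def symprod_def by simp
      also have "\<dots> = cls NN (dl (Leaf (circ u v)) + dl (Leaf (circ v u)))"
        by (rule cls_eqI[OF leaf_add])
      finally show ?thesis unfolding Leaf \<open>s = Leaf u\<close> by (simp add: circ_act)
    next
      case (Node r1 r2)
      then have n: "2 \<le> nlv r" using nlv_Node2 by simp
      show ?thesis unfolding \<open>s = Leaf u\<close> using AG_L[OF n] Node.hyps(2) n by simp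
    qed
  next
    case (Node s1 s2)
    then have ns: "2 \<le> nlv s" using nlv_Node2 by simp
    show ?thesis
    proof (cases r)
      case (Leaf v)
      let ?sg = "- sgnk (nlv s) :: 'k"
      have L: "D (nlv s) (cls NN (dl (Node (Leaf v) s))) = cls NN (DT act Theta (Node (Leaf v) s))"
        using AG_L[OF ns] Node.hyps(1) ns by simp
      have a1: "brF (dl s) (dl (Leaf v)) + smul (sgnk (nlv s * nlv (Leaf v))) (brF (dl (Leaf v)) (dl s)) \<in> II"
        by (rule antisym_Iid[OF FT_dl]) simp
      have a2: "brF (dl s) (dl (Leaf v)) + smul (sgnk (nlv s * nlv (Leaf v))) (brF (dl (Leaf v)) (dl s)) \<in> (FT (nlv s + 1) :: ('v,'k) fv set)"
        by (simp add: FT_add FT_smul FT_dl)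
      have "dl (Node s (Leaf v)) - smul ?sg (dl (Node (Leaf v) s)) \<in> NN"
        using Iid_FT_N[OF a1 a2] by (simp add: smul_neg)
      then have "cls NN (dl (Node s (Leaf v))) = smulT NN ?sg (cls NN (dl (Node (Leaf v) s)))"
        using cls_eqI smulT_cls by metis
      moreover have "cls NN (dl (Node (Leaf v) s)) \<in> Tsp NN (nlv s + 1)" by (rule Tsp_cls[OF FT_dl]) simp
      ultimately have "D (nlv s) (cls NN (dl (Node s (Leaf v)))) = smulT NN ?sg (cls NN (DT act Theta (Node (Leaf v) s)))"
        using D_smul[of "nlv s"] ns L by simp
      also have "\<dots> = cls NN (DT act Theta (Node s (Leaf v)))" by (simp add: smulT_cls DT_R[OF ns])
      finally show ?thesis unfolding Leaf by simp
    next
      case (Node r1 r2)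
      then have nr: "2 \<le> nlv r" using nlv_Node2 by simp
      have X: "cls NN (dl s) \<in> Tsp NN (nlv s)" by (rule Tsp_cls[OF FT_dl]) simp
      have Y: "cls NN (dl r) \<in> Tsp NN (nlv r)" by (rule Tsp_cls[OF FT_dl]) simp
      have "D (nlv s + nlv r - 1) (cls NN (dl (Node s r))) = D (nlv s + nlv r - 1) (brT NN (cls NN (dl s)) (cls NN (dl r)))"
        by (simp add: brT_cls)
      also have "\<dots> = addT NN (brT NN (cls NN (DT act Theta s)) (cls NN (dl r))) (smulT NN ((-1) ^ nlv s) (brT NN (cls NN (dl s)) (cls NN (DT act Theta r))))"
        using H5[OF ns nr X Y] Node.hyps ns nr by simp
      also have "\<dots> = cls NN (DT act Theta (Node s r))"
        by (simp add: brT_cls smulT_cls addT_cls DT_NN[OF ns nr] sgnk_def)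
      finally show ?thesis by simp
    qed
  qed
qed

lemma AG_FT: assumes "f \<in> FT m" "2 \<le> m" shows "D (m - 1) (cls NN f) = cls NN (DX act Theta f)"
  using assms(1)
proof (induct rule: FT_induct[where P="\<lambda>f. D (m - 1) (cls NN f) = cls NN (DX act Theta f)"])
  case zero then show ?case using D_N[of "m - 1"] assms(2) by (simp add: cls_0)
next
  case (base t) then show ?case using AG[of t] assms(2) by simp
next
  case (add f g)
  have m: "1 \<le> m - 1" "m - 1 + 1 = m" using assms(2) by auto
  have "D (m - 1) (cls NN (f + g)) = D (m - 1) (addT NN (cls NN f) (cls NN g))" by (simp add: addT_cls)
  also have "\<dots> = addT NN (D (m - 1) (cls NN f)) (D (m - 1) (cls NN g))"
    using D_add[OF m(1)] Tsp_cls[OF add(1)] Tsp_cls[OF add(2)] m(2) by simp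
  also have "\<dots> = cls NN (DX act Theta (f + g))" using add(3,4) FT_fs[OF add(1)] FT_fs[OF add(2)]
    by (simp add: addT_cls DX_add)
  finally show ?case .
next
  case (smul c f)
  have m: "1 \<le> m - 1" "m - 1 + 1 = m" using assms(2) by auto
  have "D (m - 1) (cls NN (smul c f)) = D (m - 1) (smulT NN c (cls NN f))" by (simp add: smulT_cls)
  also have "\<dots> = smulT NN c (D (m - 1) (cls NN f))"
    using D_smul[OF m(1)] Tsp_cls[OF smul(1)] m(2) by simp
  also have "\<dots> = cls NN (DX act Theta (smul c f))" using smul(2) by (simp add: smulT_cls DX_smul)
  finally show ?case .
qed

end
end

definition rp :: "('v,'k::field) fv set \<Rightarrow> nat \<Rightarrow> ('v,'k) fv set \<Rightarrow> ('v,'k) fv" where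
  "rp N i X = (SOME f. f \<in> FT (i + 1) \<and> X = cls N f)"

definition MU :: "('g \<Rightarrow> 'v \<Rightarrow> 'v) \<Rightarrow> ('v,'k::field) fv set \<Rightarrow> nat \<Rightarrow> ('v \<Rightarrow> 'g) \<Rightarrow> ('v,'k) fv set \<Rightarrow> ('v,'k) fv set" where
  "MU act N i Xi = hext N i (\<lambda>X. cls N (DX act Xi (rp N i X)))"

context LL begin

definition PP :: "nat \<Rightarrow> ('v \<Rightarrow> 'g) \<Rightarrow> bool" where
  "PP i Xi \<longleftrightarrow> (\<forall>f. f \<in> (FT (i + 1) :: ('v,'k) fv set) \<longrightarrow> f \<in> NN \<longrightarrow> DX act Xi f \<in> NN)"

lemma rp_spec: assumes "X \<in> Tsp NN (i + 1)" shows "rp NN i X \<in> FT (i + 1)" "X = cls NN (rp NN i X)"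
proof -
  obtain f where "f \<in> FT (i + 1)" "X = cls NN f" using assms unfolding Tsp_def by blast
  then have "\<exists>f. f \<in> FT (i + 1) \<and> X = cls NN f" by blast
  then have "rp NN i X \<in> FT (i + 1) \<and> X = cls NN (rp NN i X)" unfolding rp_def by (rule someI_ex)
  then show "rp NN i X \<in> FT (i + 1)" "X = cls NN (rp NN i X)" by auto
qed

lemma MU_in: "X \<in> Tsp NN (i + 1) \<Longrightarrow> MU act NN i Xi X = cls NN (DX act Xi (rp NN i X))"
  unfolding MU_def hext_def by simp
lemma MU_out: "X \<notin> Tsp NN (i + 1) \<Longrightarrow> MU act NN i Xi X = NN"
  unfolding MU_def hext_def by simp

lemma Tsp_cls': "f \<in> FT n \<Longrightarrow> cls NN f \<in> Tsp NN n" unfolding Tsp_def by blast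

lemma MU_cls: assumes f: "f \<in> FT (i + 1)" and P: "PP i Xi"
  shows "MU act NN i Xi (cls NN f) = cls NN (DX act Xi f)"
proof -
  let ?X = "cls NN f"
  have X: "?X \<in> Tsp NN (i + 1)" by (rule Tsp_cls'[OF f])
  note r = rp_spec[OF X]
  have "rp NN i ?X - f \<in> NN" using r(2) cls_eq_iff by metis
  moreover have "rp NN i ?X - f \<in> FT (i + 1)" using r(1) f by (rule FT_diff)
  ultimately have "DX act Xi (rp NN i ?X - f) \<in> NN" using P unfolding PP_def by blast
  then have "DX act Xi (rp NN i ?X) - DX act Xi f \<in> NN"
    using DX_diff[OF FT_fs[OF r(1)] FT_fs[OF f], where act=act and Xi=Xi] by simp
  then show ?thesis unfolding MU_in[OF X] by (rule cls_eqI)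
qed

lemma MU_add: "MU act NN i (homVadd Xi Psi) = hadd NN i (MU act NN i Xi) (MU act NN i Psi)"
proof (rule ext)
  fix X
  show "MU act NN i (homVadd Xi Psi) X = hadd NN i (MU act NN i Xi) (MU act NN i Psi) X"
  proof (cases "X \<in> Tsp NN (i + 1)")
    case True
    note r = rp_spec[OF True]
    have "MU act NN i (homVadd Xi Psi) X = cls NN (DX act Xi (rp NN i X) + DX act Psi (rp NN i X))"
      unfolding MU_in[OF True] by (rule cls_eqI[OF DX_homVadd[OF FT_fs[OF r(1)]]])
    then show ?thesis unfolding hadd_def hext_def using True by (simp add: MU_in addT_cls)
  next
    case False then show ?thesis unfolding hadd_def hext_def by (simp add: MU_out)
  qed
qed

lemma MU_smul: "MU act NN i (homVsmul sg c Xi) = hsmul NN i c (MU act NN i Xi)"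
proof (rule ext)
  fix X
  show "MU act NN i (homVsmul sg c Xi) X = hsmul NN i c (MU act NN i Xi) X"
  proof (cases "X \<in> Tsp NN (i + 1)")
    case True
    note r = rp_spec[OF True]
    have "MU act NN i (homVsmul sg c Xi) X = cls NN (smul c (DX act Xi (rp NN i X)))"
      unfolding MU_in[OF True] by (rule cls_eqI[OF DX_homVsmul[OF FT_fs[OF r(1)]]])
    then show ?thesis unfolding hsmul_def hext_def using True by (simp add: MU_in smulT_cls)
  next
    case False then show ?thesis unfolding hsmul_def hext_def by (simp add: MU_out)
  qed
qed

lemma MU_act: assumes P: "PP i Xi"
  shows "MU act NN i (homVact br act a Xi) = hact act NN i a (MU act NN i Xi)"
proof (rule ext)
  fix X
  show "MU act NN i (homVact br act a Xi) X = hact act NN i a (MU act NN i Xi) X"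
  proof (cases "X \<in> Tsp NN (i + 1)")
    case True
    note r = rp_spec[OF True]
    let ?f = "rp NN i X"
    have af: "actF act a ?f \<in> FT (i + 1)" by (rule actF_FT[OF r(1)])
    have e1: "actT act NN a X = cls NN (actF act a ?f)" by (subst r(2)) (rule actT_cls[OF FT_fs[OF r(1)]])
    have e2: "MU act NN i Xi (actT act NN a X) = cls NN (DX act Xi (actF act a ?f))"
      unfolding e1 by (rule MU_cls[OF af P])
    have e3: "actT act NN a (MU act NN i Xi X) = cls NN (actF act a (DX act Xi ?f))"
      unfolding MU_in[OF True] by (rule actT_cls) simp
    have "hact act NN i a (MU act NN i Xi) X = cls NN (actF act a (DX act Xi ?f) - DX act Xi (actF act a ?f))"
      unfolding hact_def hext_def using True by (simp add: e2 e3 smulT_cls addT_cls)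
    also have "\<dots> = MU act NN i (homVact br act a Xi) X"
      unfolding MU_in[OF True] by (rule sym, rule cls_eqI[OF DX_homVact[OF FT_fs[OF r(1)]]])
    finally show ?thesis by simp
  next
    case False then show ?thesis unfolding hact_def hext_def by (simp add: MU_out)
  qed
qed

lemma homVsmul_0: "homVsmul sg 0 Theta = (\<lambda>_. 0)"
proof -
  interpret G: Vector_Spaces.vector_space sg by (rule VSg)
  show ?thesis unfolding homVsmul_def by simp
qed

lemma MU_zero: "MU act NN i (\<lambda>_. 0) = hzero NN"
proof (rule ext)
  fix X
  show "MU act NN i (\<lambda>_. 0) X = hzero NN X"
  proof (cases "X \<in> Tsp NN (i + 1)")
    case True
    note r = rp_spec[OF True]
    have "DX act (homVsmul sg 0 Theta) (rp NN i X) - smul 0 (DX act Theta (rp NN i X)) \<in> NN"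
      by (rule DX_homVsmul[OF FT_fs[OF r(1)]])
    then have "DX act (\<lambda>_. 0) (rp NN i X) - 0 \<in> NN" unfolding homVsmul_0 by simp
    then have "cls NN (DX act (\<lambda>_. 0) (rp NN i X)) = cls NN 0" by (rule cls_eqI)
    then show ?thesis unfolding MU_in[OF True] hzero_def cls_0 .
  next
    case False then show ?thesis unfolding hzero_def by (simp add: MU_out)
  qed
qed

lemma PP_add: "PP i Xi \<Longrightarrow> PP i Psi \<Longrightarrow> PP i (homVadd Xi Psi)"
  unfolding PP_def
proof (intro allI impI)
  fix f :: "('v,'k) fv"
  assume a: "\<forall>f. f \<in> FT (i + 1) \<longrightarrow> f \<in> NN \<longrightarrow> DX act Xi f \<in> NN"
    "\<forall>f. f \<in> FT (i + 1) \<longrightarrow> f \<in> NN \<longrightarrow> DX act Psi f \<in> NN" and f: "f \<in> FT (i + 1)" "f \<in> NN"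
  have n: "DX act (homVadd Xi Psi) f - (DX act Xi f + DX act Psi f) \<in> NN" by (rule DX_homVadd[OF FT_fs[OF f(1)]])
  have m: "DX act Xi f + DX act Psi f \<in> NN" using a f by (intro N_add) blast+
  have "DX act (homVadd Xi Psi) f = (DX act (homVadd Xi Psi) f - (DX act Xi f + DX act Psi f)) + (DX act Xi f + DX act Psi f)"
    by simp
  also have "\<dots> \<in> NN" by (rule N_add[OF n m])
  finally show "DX act (homVadd Xi Psi) f \<in> NN" .
qed

lemma PP_smul: "PP i Xi \<Longrightarrow> PP i (homVsmul sg c Xi)"
  unfolding PP_def
proof (intro allI impI)
  fix f :: "('v,'k) fv"
  assume a: "\<forall>f. f \<in> FT (i + 1) \<longrightarrow> f \<in> NN \<longrightarrow> DX act Xi f \<in> NN" and f: "f \<in> FT (i + 1)" "f \<in> NN"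
  have n: "DX act (homVsmul sg c Xi) f - smul c (DX act Xi f) \<in> NN" by (rule DX_homVsmul[OF FT_fs[OF f(1)]])
  have m: "smul c (DX act Xi f) \<in> NN" using a f by (intro N_smul) blast
  have "DX act (homVsmul sg c Xi) f = (DX act (homVsmul sg c Xi) f - smul c (DX act Xi f)) + smul c (DX act Xi f)"
    by simp
  also have "\<dots> \<in> NN" by (rule N_add[OF n m])
  finally show "DX act (homVsmul sg c Xi) f \<in> NN" .
qed

lemma PP_act: "PP i Xi \<Longrightarrow> PP i (homVact br act a Xi)"
  unfolding PP_def
proof (intro allI impI)
  fix f :: "('v,'k) fv"
  assume a: "\<forall>f. f \<in> FT (i + 1) \<longrightarrow> f \<in> NN \<longrightarrow> DX act Xi f \<in> NN" and f: "f \<in> FT (i + 1)" "f \<in> NN"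
  have n1: "DX act Xi f \<in> NN" using a f by simp
  have n2: "DX act Xi (actF act a f) \<in> NN" using a actF_FT[OF f(1), of act a] N_act[OF f(2), of a] by simp
  have n: "DX act (homVact br act a Xi) f - (actF act a (DX act Xi f) - DX act Xi (actF act a f)) \<in> NN"
    by (rule DX_homVact[OF FT_fs[OF f(1)]])
  have "DX act (homVact br act a Xi) f = (DX act (homVact br act a Xi) f - (actF act a (DX act Xi f) - DX act Xi (actF act a f)))
       + (actF act a (DX act Xi f) - DX act Xi (actF act a f))"
    by simp
  also have "\<dots> \<in> NN" by (rule N_add[OF n N_diff[OF N_act[OF n1] n2]])
  finally show "DX act (homVact br act a Xi) f \<in> NN" .
qed

context
  fixes D :: "nat \<Rightarrow> ('v, 'k) fv set \<Rightarrow> ('v, 'k) fv set"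
  assumes DP: "is_LL_differential sv act circ Theta D"
begin

lemma PP_Theta: assumes i: "1 \<le> i" shows "PP i Theta"
  unfolding PP_def
proof (intro allI impI)
  fix f :: "('v,'k) fv" assume f: "f \<in> FT (i + 1)" "f \<in> NN"
  have "cls NN f = cls NN 0" using f(2) by (intro cls_eqI) simp
  then have "cls NN (DX act Theta f) = D i NN" using AG_FT[OF DP f(1)] i cls_0 by simp
  also have "\<dots> = cls NN 0" using D_N[OF DP i] cls_0 by simp
  finally show "DX act Theta f \<in> NN" using cls_eq_iff by simp
qed

lemma PP_foldr: "1 \<le> i \<Longrightarrow> PP i (foldr (homVact br act) as Theta)"
  by (induct as) (simp_all add: PP_Theta PP_act)

lemma PP_R: assumes i: "1 \<le> i" and "Xi \<in> R_Theta sg br act Theta" shows "PP i Xi"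
  using assms(2) unfolding R_Theta_def
proof (induct rule: gspan.induct[where P="\<lambda>Xi. PP i Xi"])
  case gspan_zero show ?case using PP_smul[OF PP_Theta[OF i], of 0] homVsmul_0 by simp
next
  case (gspan_base x)
  then obtain as where "x = foldr (homVact br act) as Theta" by blast
  then show ?case using PP_foldr[OF i] by simp
next
  case (gspan_add x y) show ?case by (rule PP_add[OF gspan_add(2,4)])
next
  case (gspan_smul x c) show ?case by (rule PP_smul[OF gspan_smul(2)])
qed

lemma MU_Theta: assumes i: "1 \<le> i" shows "MU act NN i Theta = hext NN i (D i)"
proof (rule ext)
  fix X
  show "MU act NN i Theta X = hext NN i (D i) X"
  proof (cases "X \<in> Tsp NN (i + 1)")
    case True
    note r = rp_spec[OF True]
    have "MU act NN i Theta X = D i (cls NN (rp NN i X))"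
      unfolding MU_in[OF True] using AG_FT[OF DP r(1)] i by simp
    then show ?thesis unfolding hext_def using True r(2) by simp
  next
    case False then show ?thesis unfolding hext_def by (simp add: MU_out)
  qed
qed

lemma MU_foldr: "1 \<le> i \<Longrightarrow> MU act NN i (foldr (homVact br act) as Theta) = foldr (hact act NN i) as (hext NN i (D i))"
  by (induct as) (simp_all add: MU_Theta MU_act PP_foldr)

lemma mainLL: assumes i: "1 \<le> i"
  shows "let N = Ntot sv act circ; R = Rcyc act N i (hext N i (D i)) in
       (\<forall>Xi\<in>R_Theta sg br act Theta. MU act NN i Xi \<in> R)
     \<and> (\<forall>Xi\<in>R_Theta sg br act Theta. \<forall>Psi\<in>R_Theta sg br act Theta.
          MU act NN i (homVadd Xi Psi) = hadd N i (MU act NN i Xi) (MU act NN i Psi))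
     \<and> (\<forall>c. \<forall>Xi\<in>R_Theta sg br act Theta. MU act NN i (homVsmul sg c Xi) = hsmul N i c (MU act NN i Xi))
     \<and> (\<forall>a. \<forall>Xi\<in>R_Theta sg br act Theta. MU act NN i (homVact br act a Xi) = hact act N i a (MU act NN i Xi))
     \<and> MU act NN i ` R_Theta sg br act Theta = R
     \<and> MU act NN i Theta = hext N i (D i)"
proof -
  let ?R = "Rcyc act NN i (hext NN i (D i))"
  have c1: "MU act NN i Xi \<in> ?R" if "Xi \<in> R_Theta sg br act Theta" for Xi
    using that unfolding R_Theta_def
  proof (induct rule: gspan.induct[where P="\<lambda>Xi. MU act NN i Xi \<in> ?R"])
    case gspan_zero show ?case unfolding MU_zero Rcyc_def by (rule gspan.gspan_zero)
  next
    case (gspan_base x)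
    then obtain as where "x = foldr (homVact br act) as Theta" by blast
    then show ?case unfolding Rcyc_def using MU_foldr[OF i, of as] by (auto intro: gspan.gspan_base)
  next
    case (gspan_add x y) show ?case unfolding MU_add using gspan_add(2,4) unfolding Rcyc_def by (rule gspan.gspan_add)
  next
    case (gspan_smul x c) show ?case unfolding MU_smul using gspan_smul(2) unfolding Rcyc_def by (rule gspan.gspan_smul)
  qed
  have c5: "?R \<subseteq> MU act NN i ` R_Theta sg br act Theta"
  proof
    fix Y assume "Y \<in> ?R"
    then show "Y \<in> MU act NN i ` R_Theta sg br act Theta"
      unfolding Rcyc_def
    proof (induct rule: gspan.induct[where P="\<lambda>Y. Y \<in> MU act NN i ` R_Theta sg br act Theta"])
      case gspan_zero
      have "(\<lambda>_. 0) \<in> R_Theta sg br act Theta" unfolding R_Theta_def by (rule gspan.gspan_zero)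
      then show ?case using MU_zero by (metis image_eqI)
    next
      case (gspan_base x)
      then obtain as where x: "x = foldr (hact act NN i) as (hext NN i (D i))" by blast
      have "foldr (homVact br act) as Theta \<in> R_Theta sg br act Theta" unfolding R_Theta_def by (rule gspan.gspan_base) blast
      then show ?case using MU_foldr[OF i, of as] x by (metis image_eqI)
    next
      case (gspan_add x y)
      then obtain X Y where "X \<in> R_Theta sg br act Theta" "Y \<in> R_Theta sg br act Theta"
        "x = MU act NN i X" "y = MU act NN i Y" by blast
      moreover have "homVadd X Y \<in> R_Theta sg br act Theta" using calculation(1,2) unfolding R_Theta_def by (rule gspan.gspan_add)
      ultimately show ?case using MU_add by (metis image_eqI)
    next
      case (gspan_smul x c)
      then obtain X where "X \<in> R_Theta sg br act Theta" "x = MU act NN i X" by blast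
      moreover have "homVsmul sg c X \<in> R_Theta sg br act Theta" using calculation(1) unfolding R_Theta_def by (rule gspan.gspan_smul)
      ultimately show ?case using MU_smul by (metis image_eqI)
    qed
  qed
  have c4: "\<forall>a. \<forall>Xi\<in>R_Theta sg br act Theta. MU act NN i (homVact br act a Xi) = hact act NN i a (MU act NN i Xi)"
  proof (intro allI ballI)
    fix a Xi assume "Xi \<in> R_Theta sg br act Theta"
    then show "MU act NN i (homVact br act a Xi) = hact act NN i a (MU act NN i Xi)" by (rule MU_act[OF PP_R[OF i]])
  qed
  have c6: "MU act NN i ` R_Theta sg br act Theta = ?R"
  proof
    show "MU act NN i ` R_Theta sg br act Theta \<subseteq> ?R" using c1 by (rule image_subsetI)
  qed (rule c5)
  show ?thesis unfolding Let_def
    apply (intro conjI)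
    subgoal using c1 by (rule ballI)
    subgoal by (simp add: MU_add)
    subgoal by (simp add: MU_smul)
    subgoal by (rule c4)
    subgoal by (rule c6)
    subgoal by (rule MU_Theta[OF i])
    done
qed

end
end

theorem mainTheorem10:
  fixes sg :: "'k::field_char_0 \<Rightarrow> 'g \<Rightarrow> 'g::ab_group_add"
    and br :: "'g \<Rightarrow> 'g \<Rightarrow> 'g"
    and sv :: "'k \<Rightarrow> 'v \<Rightarrow> 'v::ab_group_add"
    and act :: "'g \<Rightarrow> 'v \<Rightarrow> 'v"
    and circ :: "'v \<Rightarrow> 'v \<Rightarrow> 'v"
    and Theta :: "'v \<Rightarrow> 'g"
    and D :: "nat \<Rightarrow> ('v, 'k) fv set \<Rightarrow> ('v, 'k) fv set"
  assumes LLT: "lie_leibniz_triple sg br sv act circ Theta"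
    and Dpartial: "is_LL_differential sv act circ Theta D"
  shows "\<forall>i\<ge>1. \<exists>mu :: ('v \<Rightarrow> 'g) \<Rightarrow> (('v, 'k) fv set \<Rightarrow> ('v, 'k) fv set).
     let N = Ntot sv act circ; R = Rcyc act N i (hext N i (D i)) in
       (\<forall>Xi\<in>R_Theta sg br act Theta. mu Xi \<in> R)
     \<and> (\<forall>Xi\<in>R_Theta sg br act Theta. \<forall>Psi\<in>R_Theta sg br act Theta.
          mu (homVadd Xi Psi) = hadd N i (mu Xi) (mu Psi))
     \<and> (\<forall>c. \<forall>Xi\<in>R_Theta sg br act Theta. mu (homVsmul sg c Xi) = hsmul N i c (mu Xi))
     \<and> (\<forall>a. \<forall>Xi\<in>R_Theta sg br act Theta. mu (homVact br act a Xi) = hact act N i a (mu Xi))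
     \<and> mu ` R_Theta sg br act Theta = R
     \<and> mu Theta = hext N i (D i)"
proof (intro allI impI)
  fix i :: nat assume i: "1 \<le> i"
  interpret LL sg br sv act circ Theta by (rule LL.intro[OF LLT])
  show "\<exists>mu :: ('v \<Rightarrow> 'g) \<Rightarrow> (('v, 'k) fv set \<Rightarrow> ('v, 'k) fv set).
     let N = Ntot sv act circ; R = Rcyc act N i (hext N i (D i)) in
       (\<forall>Xi\<in>R_Theta sg br act Theta. mu Xi \<in> R)
     \<and> (\<forall>Xi\<in>R_Theta sg br act Theta. \<forall>Psi\<in>R_Theta sg br act Theta.
          mu (homVadd Xi Psi) = hadd N i (mu Xi) (mu Psi))
     \<and> (\<forall>c. \<forall>Xi\<in>R_Theta sg br act Theta. mu (homVsmul sg c Xi) = hsmul N i c (mu Xi))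
     \<and> (\<forall>a. \<forall>Xi\<in>R_Theta sg br act Theta. mu (homVact br act a Xi) = hact act N i a (mu Xi))
     \<and> mu ` R_Theta sg br act Theta = R
     \<and> mu Theta = hext N i (D i)"
    by (rule exI[of _ "MU act (Ntot sv act circ) i"]) (rule mainLL[OF Dpartial i])
qed


end
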